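(* Every AND-OR net, i.e. every net in $\mathbf S(\mathbf{pAND}\cup\mathbf{11tAND}\cup\mathbf{11pOR}\cup\mathbf{tOR})$, is sub-sound.
   Context: Petri nets and markings. A Petri net is a triple $(P,T,F)$ with $P$ a finite set of places, $T$ a finite set of transitions, $P\cap T=\emptyset$, and $F\subseteq (P\times T)\cup(T\times P)$. For a node $x$, $\bullet x=\{y\mid (y,x)\in F\}$, $x\bullet=\{y\mid (x,y)\in F\}$. A marking is a multiset over $P$ (a function $P\to\mathbb N$); sets of places are identified with bags of multiplicity one, $+,-,\le$ are pointwise, and $k.m$ is the sum of $k$ copies of $m$. Transition $t$ is enabled at $m$ iff $\bullet t\le m$, firing gives $m-\bullet t+t\bullet$, and $m\xrightarrow{*}m'$ denotes reachability by a finite (possibly empty) firing sequence. Workflow nets. A pWF net is $(P,T,F,I,O)$ with $(P,T,F)$ a Petri net, $I,O\subseteq P$ non-empty, every node reachable by a directed path from some node of $I$, and some node of $O$ reachable from every node. A tWF net is the same with $I,O$ non-empty subsets of $T$. Input nodes may have incoming edges and output nodes outgoing edges. A WF net is a pWF or tWF net; it is one-input (one-output) if $|I|=1$ ($|O|=1$). The place-completion $\mathrm{pc}(N)$ of a tWF net $N=(P,T,F,I,O)$ is obtained by adding two fresh places $p_i,p_o$ with edges $(p_i,t)$ for all $t\in I$ and $(t,p_o)$ for all $t\in O$, and taking input set $\{p_i\}$ and output set $\{p_o\}$. Sub-soundness. A pWF net is sub-sound if for all integers $k\ge k'\ge 0$ and every marking $m'$: if $k.I\xrightarrow{*}m'+k'.O$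 then $m'\xrightarrow{*}(k-k').O$. A tWF net is sub-sound iff its place-completion is. Substitution. Let $N=(P,T,F,I,O)$ and $M=(P',T',F',I',O')$ be WF nets with disjoint node sets. If $p\in P$ and $M$ is a pWF net, $N\otimes_p M$ is obtained from $N$ by deleting $p$ and all edges incident to $p$, adding all nodes and edges of $M$, adding an edge $(t,p')$ for each $t\in\bullet_N p$ and each $p'\in I'$, and an edge $(p',t)$ for each $p'\in O'$ and each $t\in p\bullet_N$; its input set is $(I\setminus\{p\})\cup I'$ if $p\in I$ and $I$ otherwise, and its output set is $(O\setminus\{p\})\cup O'$ if $p\in O$ and $O$ otherwise. If $t\in T$ and $M$ is a tWF net, $N\otimes_t M$ is defined analogously: delete $t$ and its edges, add $M$, add $(q,t')$ for each $q\in\bullet_N t$, $t'\in I'$, and $(t',q)$ for each $t'\in O'$, $q\in t\bullet_N$, with input/output sets updated in the same way. The substitution closure $\mathbf S(C)$ of a class $C$ of WF nets is the smallest superclass of $C$ such that whenever $N,M\in\mathbf S(C)$ are disjoint, $N\otimes_p M\in\mathbf S(C)$ for every place $p$ of $N$ if $M$ is a pWF net, and $N\otimes_t M\in\mathbf S(C)$ for every transition $t$ of $N$ if $M$ is a tWF net. AND and OR nets. An AND net is an acyclic WF net $(P,T,F,I,O)$ such that for every place $p$: (1) either $p\in I$ and $|\bullet p|=0$, or $p\notin I$ and $|\bullet p|=1$; and (2) either $p\in O$ and $|p\bullet|=0$, or $p\notin O$ and $|p\bullet|=1$. An OR net is a (possibly cyclic) WF net such that for every transition $t$: (1) either $t\in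 I$ and $|\bullet t|=0$, or $t\notin I$ and $|\bullet t|=1$; and (2) either $t\in O$ and $|t\bullet|=0$, or $t\notin O$ and $|t\bullet|=1$. A pAND (tAND, pOR, tOR) net is an AND (AND, OR, OR) net that is a pWF (tWF, pWF, tWF) net. $\mathbf{pAND}$ is the class of pAND nets, $\mathbf{11tAND}$ the class of one-input one-output tAND nets, $\mathbf{11pOR}$ the class of one-input one-output pOR nets, and $\mathbf{tOR}$ the class of tOR nets. *)

theory Defs
  imports Main "HOL-Library.Multiset"
begin

record 'n net =
  places :: "'n set"
  trans  :: "'n set"
  flow   :: "('n \<times> 'n) set"
  inp    :: "'n set"
  outp   :: "'n set"

definition nodes :: "('n, 'z) net_scheme \<Rightarrow> 'n set" where
  "nodes N = places N \<union> trans N"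

definition preset :: "('n, 'z) net_scheme \<Rightarrow> 'n \<Rightarrow> 'n set" where
  "preset N x = {y. (y, x) \<in> flow N}"

definition postset :: "('n, 'z) net_scheme \<Rightarrow> 'n \<Rightarrow> 'n set" where
  "postset N x = {y. (x, y) \<in> flow N}"

definition petri_net :: "('n, 'z) net_scheme \<Rightarrow> bool" where
  "petri_net N \<longleftrightarrow> finite (places N) \<and> finite (trans N)
     \<and> places N \<inter> trans N = {}
     \<and> flow N \<subseteq> (places N \<times> trans N) \<union> (trans N \<times> places N)"

text \<open>Markings are multisets of places; a set of places is the multiset of multiplicity one.\<close>

definition marking :: "('n, 'z) net_scheme \<Rightarrow> 'n multiset \<Rightarrow> bool" where
  "marking N m \<longleftrightarrow> set_mset m \<subseteq> places N"

definition fire :: "('n, 'z) net_scheme \<Rightarrow> 'n multiset \<Rightarrow> 'n multiset \<Rightarrow> bool" where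
  "fire N m m' \<longleftrightarrow> (\<exists>t \<in> trans N. mset_set (preset N t) \<subseteq># m
       \<and> m' = m - mset_set (preset N t) + mset_set (postset N t))"

definition reach :: "('n, 'z) net_scheme \<Rightarrow> 'n multiset \<Rightarrow> 'n multiset \<Rightarrow> bool" where
  "reach N = (fire N)\<^sup>*\<^sup>*"

definition wf_conn :: "('n, 'z) net_scheme \<Rightarrow> bool" where
  "wf_conn N \<longleftrightarrow> inp N \<noteq> {} \<and> outp N \<noteq> {}
     \<and> (\<forall>x \<in> nodes N. \<exists>i \<in> inp N. (i, x) \<in> (flow N)\<^sup>*)
     \<and> (\<forall>x \<in> nodes N. \<exists>q \<in> outp N. (x, q) \<in> (flow N)\<^sup>*)"

definition pWF :: "('n, 'z) net_scheme \<Rightarrow> bool" where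
  "pWF N \<longleftrightarrow> petri_net N \<and> inp N \<subseteq> places N \<and> outp N \<subseteq> places N \<and> wf_conn N"

definition tWF :: "('n, 'z) net_scheme \<Rightarrow> bool" where
  "tWF N \<longleftrightarrow> petri_net N \<and> inp N \<subseteq> trans N \<and> outp N \<subseteq> trans N \<and> wf_conn N"

definition WF :: "('n, 'z) net_scheme \<Rightarrow> bool" where
  "WF N \<longleftrightarrow> pWF N \<or> tWF N"

text \<open>Place completion; the two fresh places are realised as \<open>Inr False\<close> (p_i)
  and \<open>Inr True\<close> (p_o), the original nodes are tagged with \<open>Inl\<close>.\<close>

definition pc :: "'n net \<Rightarrow> ('n + bool) net" where
  "pc N = \<lparr> places = Inl ` places N \<union> {Inr False, Inr True},
            trans = Inl ` trans N,
            flow = map_prod Inl Inl ` flow N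
                   \<union> {(Inr False, Inl t) | t. t \<in> inp N}
                   \<union> {(Inl t, Inr True) | t. t \<in> outp N},
            inp = {Inr False},
            outp = {Inr True} \<rparr>"

definition sub_sound_p :: "('n, 'z) net_scheme \<Rightarrow> bool" where
  "sub_sound_p N \<longleftrightarrow> (\<forall>k k' m'. k' \<le> k \<longrightarrow> marking N m' \<longrightarrow>
      reach N (repeat_mset k (mset_set (inp N))) (m' + repeat_mset k' (mset_set (outp N)))
      \<longrightarrow> reach N m' (repeat_mset (k - k') (mset_set (outp N))))"

definition sub_sound :: "'n net \<Rightarrow> bool" where
  "sub_sound N \<longleftrightarrow> (pWF N \<and> sub_sound_p N) \<or> (tWF N \<and> sub_sound_p (pc N))"

definition subst_place :: "'n net \<Rightarrow> 'n \<Rightarrow> 'n net \<Rightarrow> 'n net" where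
  "subst_place N p M = \<lparr>
     places = (places N - {p}) \<union> places M,
     trans = trans N \<union> trans M,
     flow = {e \<in> flow N. fst e \<noteq> p \<and> snd e \<noteq> p} \<union> flow M
            \<union> {(t, p') | t p'. t \<in> preset N p \<and> p' \<in> inp M}
            \<union> {(p', t) | p' t. p' \<in> outp M \<and> t \<in> postset N p},
     inp = (if p \<in> inp N then (inp N - {p}) \<union> inp M else inp N),
     outp = (if p \<in> outp N then (outp N - {p}) \<union> outp M else outp N) \<rparr>"

definition subst_trans :: "'n net \<Rightarrow> 'n \<Rightarrow> 'n net \<Rightarrow> 'n net" where
  "subst_trans N t M = \<lparr>
     places = places N \<union> places M,
     trans = (trans N - {t}) \<union> trans M,
     flow = {e \<in> flow N. fst e \<noteq> t \<and> snd e \<noteq> t} \<union> flow M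
            \<union> {(q, t') | q t'. q \<in> preset N t \<and> t' \<in> inp M}
            \<union> {(t', q) | t' q. t' \<in> outp M \<and> q \<in> postset N t},
     inp = (if t \<in> inp N then (inp N - {t}) \<union> inp M else inp N),
     outp = (if t \<in> outp N then (outp N - {t}) \<union> outp M else outp N) \<rparr>"

inductive_set subst_closure :: "'n net set \<Rightarrow> 'n net set" for C :: "'n net set" where
  base: "N \<in> C \<Longrightarrow> N \<in> subst_closure C"
| place: "\<lbrakk>N \<in> subst_closure C; M \<in> subst_closure C; nodes N \<inter> nodes M = {};
           p \<in> places N; pWF M\<rbrakk> \<Longrightarrow> subst_place N p M \<in> subst_closure C"
| trans: "\<lbrakk>N \<in> subst_closure C; M \<in> subst_closure C; nodes N \<inter> nodes M = {};
           t \<in> trans N; tWF M\<rbrakk> \<Longrightarrow> subst_trans N t M \<in> subst_closure C"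

definition AND_net :: "'n net \<Rightarrow> bool" where
  "AND_net N \<longleftrightarrow> WF N \<and> acyclic (flow N) \<and>
     (\<forall>p \<in> places N.
        ((p \<in> inp N \<and> card (preset N p) = 0) \<or> (p \<notin> inp N \<and> card (preset N p) = 1))
      \<and> ((p \<in> outp N \<and> card (postset N p) = 0) \<or> (p \<notin> outp N \<and> card (postset N p) = 1)))"

definition OR_net :: "'n net \<Rightarrow> bool" where
  "OR_net N \<longleftrightarrow> WF N \<and>
     (\<forall>t \<in> trans N.
        ((t \<in> inp N \<and> card (preset N t) = 0) \<or> (t \<notin> inp N \<and> card (preset N t) = 1))
      \<and> ((t \<in> outp N \<and> card (postset N t) = 0) \<or> (t \<notin> outp N \<and> card (postset N t) = 1)))"

definition pAND :: "'n net set" where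
  "pAND = {N. AND_net N \<and> pWF N}"

definition tAND11 :: "'n net set" where
  "tAND11 = {N. AND_net N \<and> tWF N \<and> card (inp N) = 1 \<and> card (outp N) = 1}"

definition pOR11 :: "'n net set" where
  "pOR11 = {N. OR_net N \<and> pWF N \<and> card (inp N) = 1 \<and> card (outp N) = 1}"

definition tOR :: "'n net set" where
  "tOR = {N. OR_net N \<and> tWF N}"

end

theory Submission
  imports Defs
begin


lemma pn_finite_flow: "petri_net X \<Longrightarrow> finite (flow X)"
  unfolding petri_net_def by (meson finite_SigmaI finite_Un rev_finite_subset)

lemma pn_finite_preset: "petri_net X \<Longrightarrow> finite (preset X u)"
proof -
  assume "petri_net X"
  then have "finite (flow X)" by (rule pn_finite_flow)
  then have "finite (fst ` flow X)" by simp
  moreover have "preset X u \<subseteq> fst ` flow X" unfolding preset_def by force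
  ultimately show ?thesis by (rule finite_subset[rotated])
qed

lemma pn_finite_postset: "petri_net X \<Longrightarrow> finite (postset X u)"
proof -
  assume "petri_net X"
  then have "finite (flow X)" by (rule pn_finite_flow)
  then have "finite (snd ` flow X)" by simp
  moreover have "postset X u \<subseteq> snd ` flow X" unfolding postset_def by force
  ultimately show ?thesis by (rule finite_subset[rotated])
qed

lemma pn_preset_trans: "petri_net X \<Longrightarrow> u \<in> trans X \<Longrightarrow> preset X u \<subseteq> places X"
  unfolding petri_net_def preset_def by auto

lemma pn_postset_trans: "petri_net X \<Longrightarrow> u \<in> trans X \<Longrightarrow> postset X u \<subseteq> places X"
  unfolding petri_net_def postset_def by auto

lemma pn_preset_place: "petri_net X \<Longrightarrow> q \<in> places X \<Longrightarrow> preset X q \<subseteq> trans X"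
  unfolding petri_net_def preset_def by auto

lemma pn_postset_place: "petri_net X \<Longrightarrow> q \<in> places X \<Longrightarrow> postset X q \<subseteq> trans X"
  unfolding petri_net_def postset_def by auto

lemma pn_flow_nodes: "petri_net X \<Longrightarrow> (a,b) \<in> flow X \<Longrightarrow> a \<in> nodes X \<and> b \<in> nodes X"
  unfolding petri_net_def nodes_def by auto

lemma pn_noself: "petri_net X \<Longrightarrow> (a,a) \<notin> flow X"
  unfolding petri_net_def by auto

lemma reach_refl[simp]: "reach X m m"
  unfolding reach_def by simp

lemma reach_trans: "reach X a b \<Longrightarrow> reach X b c \<Longrightarrow> reach X a c"
  unfolding reach_def by simp

lemma fire_reach: "fire X a b \<Longrightarrow> reach X a b"
  unfolding reach_def by simp

lemma reach_fire_trans: "reach X a b \<Longrightarrow> fire X b c \<Longrightarrow> reach X a c"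
  unfolding reach_def by simp

lemma mset_eq_count: "(\<And>x. count A x = count B x) \<Longrightarrow> A = B"
  by (simp add: multiset_eq_iff)

lemma fire_intro:
  assumes "u \<in> trans X" "mset_set (preset X u) \<subseteq># m"
    "m' + mset_set (preset X u) = m + mset_set (postset X u)"
  shows "fire X m m'"
  unfolding fire_def
proof (intro bexI[OF _ assms(1)] conjI assms(2) mset_eq_count)
  fix x
  have "count m' x + count (mset_set (preset X u)) x = count m x + count (mset_set (postset X u)) x"
    using assms(3) by (metis count_union)
  moreover have "count (mset_set (preset X u)) x \<le> count m x" using assms(2)
    by (simp add: subseteq_mset_def)
  ultimately show "count m' x = count (m - mset_set (preset X u) + mset_set (postset X u)) x"
    by simp
qed

lemma fire_elim:
  assumes "fire X m m'"
  obtains u where "u \<in> trans X" "mset_set (preset X u) \<subseteq># m"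
    "m' + mset_set (preset X u) = m + mset_set (postset X u)"
proof -
  from assms obtain u where u: "u \<in> trans X" "mset_set (preset X u) \<subseteq># m"
    "m' = m - mset_set (preset X u) + mset_set (postset X u)" unfolding fire_def by blast
  have "m' + mset_set (preset X u) = m + mset_set (postset X u)"
  proof (rule mset_eq_count)
    fix x
    have "count (mset_set (preset X u)) x \<le> count m x" using u(2)
      by (simp add: subseteq_mset_def)
    then show "count (m' + mset_set (preset X u)) x = count (m + mset_set (postset X u)) x"
      using u(3) by simp
  qed
  with u that show ?thesis by blast
qed

lemma diff_add_cancel_sub: "A \<subseteq># m \<Longrightarrow> m - A + B + A = m + B"
proof (rule mset_eq_count)
  fix x assume "A \<subseteq># m"
  then have "count A x \<le> count m x" by (simp add: subseteq_mset_def)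
  then show "count (m - A + B + A) x = count (m + B) x" by simp
qed

lemma cmset: "finite A \<Longrightarrow> count (mset_set A) x = (if x \<in> A then 1 else 0)"
  by simp

lemma mem_count1[simp]: "x \<in># m \<Longrightarrow> Suc 0 \<le> count m x + n" "x \<in># m \<Longrightarrow> Suc 0 \<le> n + count m x"
  by (simp_all add: Suc_leI add_pos_nonneg trans_le_add1 trans_le_add2)

lemma mem_count2[simp]: "x \<in># m \<Longrightarrow> Suc 0 \<le> a + count m x + b"
  by (simp add: Suc_leI add_pos_nonneg trans_le_add1 trans_le_add2)

lemma count_ge1_in: "Suc n \<le> count m q \<Longrightarrow> q \<in># m"
  by (metis Suc_le_lessD count_greater_zero_iff le_less_trans zero_le)

lemma fire_mono: "fire X a b \<Longrightarrow> fire X (a + c) (b + c)"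
proof (erule fire_elim)
  fix u assume u: "u \<in> trans X" "mset_set (preset X u) \<subseteq># a"
    "b + mset_set (preset X u) = a + mset_set (postset X u)"
  show "fire X (a + c) (b + c)"
  proof (rule fire_intro[OF u(1)])
    show "mset_set (preset X u) \<subseteq># a + c" using u(2) by (simp add: subset_mset.add_increasing2)
    show "b + c + mset_set (preset X u) = a + c + mset_set (postset X u)"
      using u(3) by (simp add: add_ac)
  qed
qed

lemma reach_mono: "reach X a b \<Longrightarrow> reach X (a + c) (b + c)"
  unfolding reach_def
proof (induction rule: rtranclp_induct)
  case base then show ?case by simp
next
  case (step y z) then show ?case
    by (meson fire_mono rtranclp.rtrancl_into_rtrancl)
qed

lemma reach_add: "reach X a b \<Longrightarrow> reach X c d \<Longrightarrow> reach X (a + c) (b + d)"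
  by (metis add.commute reach_mono reach_trans)

lemma reach_ne:
  assumes "reach X a b" "a \<noteq> {#}" "\<And>u. u \<in> trans X \<Longrightarrow> postset X u \<noteq> {}"
    "\<And>u. finite (postset X u)"
  shows "b \<noteq> {#}"
  using assms(1,2) unfolding reach_def
proof (induction rule: rtranclp_induct)
  case base then show ?case by simp
next
  case (step y z)
  then obtain u where u: "u \<in> trans X" "mset_set (preset X u) \<subseteq># y"
    "z + mset_set (preset X u) = y + mset_set (postset X u)"
    by (auto elim: fire_elim)
  have "mset_set (postset X u) \<noteq> {#}" using assms(3,4) u(1)
    by (simp add: mset_set_empty_iff)
  then have "size (mset_set (postset X u)) > 0" by (simp add: nonempty_has_size)
  moreover have "size (mset_set (preset X u)) \<le> size y" using u(2) by (rule size_mset_mono)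
  moreover have "size z + size (mset_set (preset X u)) = size y + size (mset_set (postset X u))"
    using u(3) by (metis size_union)
  ultimately show ?case by auto
qed


lemma pWF_pn: "pWF X \<Longrightarrow> petri_net X" unfolding pWF_def by simp

lemma pWF_post_ne:
  assumes "pWF X" "u \<in> trans X" shows "postset X u \<noteq> {}"
proof -
  have "u \<in> nodes X" using assms(2) by (simp add: nodes_def)
  then obtain q where q: "q \<in> outp X" "(u,q) \<in> (flow X)\<^sup>*"
    using assms(1) unfolding pWF_def wf_conn_def by blast
  have "q \<in> places X" using q(1) assms(1) unfolding pWF_def by auto
  then have "u \<noteq> q" using assms unfolding pWF_def petri_net_def by auto
  then obtain y where "(u,y) \<in> flow X" using q(2) by (metis converse_rtranclE)
  then show ?thesis unfolding postset_def by auto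
qed

lemma pWF_finite_inp: "pWF X \<Longrightarrow> finite (inp X)"
  unfolding pWF_def petri_net_def by (meson finite_subset)
lemma pWF_finite_outp: "pWF X \<Longrightarrow> finite (outp X)"
  unfolding pWF_def petri_net_def by (meson finite_subset)
lemma pWF_inp_ne: "pWF X \<Longrightarrow> inp X \<noteq> {}"
  unfolding pWF_def wf_conn_def by simp
lemma pWF_outp_ne: "pWF X \<Longrightarrow> outp X \<noteq> {}"
  unfolding pWF_def wf_conn_def by simp

lemma marking_add: "marking X (a + b) \<longleftrightarrow> marking X a \<and> marking X b"
  unfolding marking_def by auto

lemma in_repeat_mset[simp]: "x \<in># repeat_mset n A \<longleftrightarrow> n > 0 \<and> x \<in># A"
  unfolding count_greater_zero_iff[symmetric] by simp

lemma marking_repeat: "marking X A \<Longrightarrow> marking X (repeat_mset n A)"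
  unfolding marking_def by auto

lemma marking_mset_set: "A \<subseteq> places X \<Longrightarrow> marking X (mset_set A)"
  unfolding marking_def by (cases "finite A") (auto simp: infinite_set_mset_mset_set)

lemma marking_repeat_outp: "pWF X \<Longrightarrow> marking X (repeat_mset n (mset_set (outp X)))"
  by (intro marking_repeat marking_mset_set) (simp add: pWF_def)

lemma overprod:
  assumes "pWF X" "sub_sound_p X" "marking X a"
    "reach X (repeat_mset J (mset_set (inp X))) (a + repeat_mset J' (mset_set (outp X)))"
  shows "J' \<le> J"
proof (rule ccontr)
  assume "\<not> J' \<le> J"
  define d where "d = J' - J"
  have d: "J' = J + d" "d > 0" using \<open>\<not> J' \<le> J\<close> unfolding d_def by auto
  let ?O = "mset_set (outp X)"
  have eq: "a + repeat_mset J' ?O = (a + repeat_mset d ?O) + repeat_mset J ?O"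
    using d(1) by (simp add: repeat_mset_distrib add_ac)
  have mk: "marking X (a + repeat_mset d ?O)"
    using assms(3) marking_repeat_outp[OF assms(1)] by (simp add: marking_add)
  have "reach X (a + repeat_mset d ?O) (repeat_mset (J - J) ?O)"
    using assms(2) mk assms(4) unfolding sub_sound_p_def eq by blast
  then have r: "reach X (a + repeat_mset d ?O) {#}" by simp
  have "?O \<noteq> {#}" using pWF_finite_outp[OF assms(1)] pWF_outp_ne[OF assms(1)]
    by (simp add: mset_set_empty_iff)
  then have "repeat_mset d ?O \<noteq> {#}" using d(2)
    by (simp add: repeat_mset_eq_empty_iff)
  then have "a + repeat_mset d ?O \<noteq> {#}" by simp
  from reach_ne[OF r this] show False
    using pWF_post_ne[OF assms(1)] pn_finite_postset[OF pWF_pn[OF assms(1)]] by blast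
qed

lemma sub_sound_one:
  assumes "pWF X" "sub_sound_p X" shows "reach X (mset_set (inp X)) (mset_set (outp X))"
proof -
  have mk: "marking X (mset_set (inp X))" using assms(1) pWF_finite_inp[OF assms(1)]
    unfolding marking_def pWF_def by auto
  have "reach X (repeat_mset 1 (mset_set (inp X))) (mset_set (inp X) + repeat_mset 0 (mset_set (outp X)))"
    by simp
  then have "reach X (mset_set (inp X)) (repeat_mset (1 - 0) (mset_set (outp X)))"
    using assms(2) mk unfolding sub_sound_p_def by blast
  then show ?thesis by simp
qed


lemma reach_size:
  assumes "reach X a b" "\<And>u. u \<in> trans X \<Longrightarrow> card (preset X u) = card (postset X u)"
    "\<And>u. finite (preset X u)" "\<And>u. finite (postset X u)"
  shows "size b = size a"
  using assms(1) unfolding reach_def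
proof (induction rule: rtranclp_induct)
  case base then show ?case by simp
next
  case (step y z)
  then obtain u where u: "u \<in> trans X"
    "z + mset_set (preset X u) = y + mset_set (postset X u)"
    by (auto elim: fire_elim)
  have "size z + size (mset_set (preset X u)) = size y + size (mset_set (postset X u))"
    using u(2) by (metis size_union)
  then show ?case using assms(2)[OF u(1)] step.IH by simp
qed

lemma SM_token:
  assumes pn: "petri_net X"
    and sm: "\<And>u. u \<in> trans X \<Longrightarrow> card (preset X u) = 1 \<and> card (postset X u) = 1"
    and ot: "ot \<in> places X"
    and path: "(x, ot) \<in> (flow X)\<^sup>*"
  shows "(x \<in> places X \<longrightarrow> reach X {#x#} {#ot#}) \<and>
         (x \<in> trans X \<longrightarrow> (\<forall>b. postset X x = {b} \<longrightarrow> reach X {#b#} {#ot#}))"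
  using path
proof (induction rule: converse_rtrancl_induct)
  case base
  then show ?case using ot pn unfolding petri_net_def by auto
next
  case (step x y)
  show ?case
  proof (intro conjI impI allI)
    assume xp: "x \<in> places X"
    then have yt: "y \<in> trans X" using step(1) pn unfolding petri_net_def by auto
    have "x \<in> preset X y" using step(1) unfolding preset_def by simp
    then have pre: "preset X y = {x}" using sm[OF yt] by (metis card_1_singletonE singletonD)
    obtain b where post: "postset X y = {b}" using sm[OF yt] by (metis card_1_singletonE)
    have "fire X {#x#} {#b#}"
      by (rule fire_intro[OF yt]) (simp_all add: pre post)
    then show "reach X {#x#} {#ot#}" using step(3) yt post
      by (meson fire_reach reach_trans)
  next
    fix b assume xt: "x \<in> trans X" and post: "postset X x = {b}"
    have "y \<in> postset X x" using step(1) unfolding postset_def by simp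
    then have "y = b" using post by simp
    have "y \<in> places X" using step(1) xt pn unfolding petri_net_def by auto
    then show "reach X {#b#} {#ot#}" using step(3) \<open>y = b\<close> by simp
  qed
qed

lemma SM_sound:
  assumes pw: "pWF X" and i: "inp X = {i}" and ot: "outp X = {ot}"
    and sm: "\<And>u. u \<in> trans X \<Longrightarrow> card (preset X u) = 1 \<and> card (postset X u) = 1"
  shows "sub_sound_p X"
proof -
  have pn: "petri_net X" using pw by (rule pWF_pn)
  have op: "ot \<in> places X" using pw ot unfolding pWF_def by auto
  have tok: "reach X {#q#} {#ot#}" if "q \<in> places X" for q
  proof -
    have "q \<in> nodes X" using that by (simp add: nodes_def)
    then have "(q,ot) \<in> (flow X)\<^sup>*" using pw ot unfolding pWF_def wf_conn_def by auto
    then show ?thesis using SM_token[OF pn sm op] that by blast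
  qed
  have all: "marking X m \<Longrightarrow> reach X m (replicate_mset (size m) ot)" for m
  proof (induction m)
    case empty then show ?case by simp
  next
    case (add x m)
    then have "x \<in> places X" "marking X m" unfolding marking_def by auto
    then have "reach X ({#x#} + m) ({#ot#} + replicate_mset (size m) ot)"
      using add tok by (intro reach_add) auto
    then show ?case by simp
  qed
  show ?thesis unfolding sub_sound_p_def
  proof (intro allI impI)
    fix k k' m' assume kk: "k' \<le> k" and mk: "marking X m'"
      and r: "reach X (repeat_mset k (mset_set (inp X))) (m' + repeat_mset k' (mset_set (outp X)))"
    have "size (m' + repeat_mset k' (mset_set (outp X))) = size (repeat_mset k (mset_set (inp X)))"
      by (rule reach_size[OF r]) (use sm pn_finite_preset[OF pn] pn_finite_postset[OF pn] in auto)
    then have "size m' = k - k'" using i ot by simp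
    then show "reach X m' (repeat_mset (k - k') (mset_set (outp X)))"
      using all[OF mk] ot by simp
  qed
qed


definition ainv :: "('n,'z) net_scheme \<Rightarrow> ('n \<Rightarrow> nat) \<Rightarrow> 'n multiset \<Rightarrow> ('n \<Rightarrow> nat) \<Rightarrow> bool" where
  "ainv X b m x \<longleftrightarrow> (\<forall>q\<in>places X. count m q + (\<Sum>v\<in>postset X q. x v) = b q + (\<Sum>v\<in>preset X q. x v))"

lemma sum_upd1: fixes x :: "'a \<Rightarrow> nat" shows "finite A \<Longrightarrow> (\<Sum>v\<in>A. (x(u := x u + 1)) v) = (\<Sum>v\<in>A. x v) + (if u \<in> A then 1 else 0)"
proof -
  assume f: "finite A"
  have "(\<Sum>v\<in>A. (x(u := x u + 1)) v) = (\<Sum>v\<in>A. x v + (if v = u then 1 else 0))"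
    by (rule sum.cong) auto
  also have "\<dots> = (\<Sum>v\<in>A. x v) + (\<Sum>v\<in>A. (if v = u then 1 else 0))" by (rule sum.distrib)
  moreover have "(\<Sum>v\<in>A. (if v = u then 1 else (0::nat))) = (if u \<in> A then 1 else 0)"
    using f by (simp add: sum.delta')
  ultimately show ?thesis by (simp only:)
qed

lemma inv_step:
  assumes pn: "petri_net X" and u: "u \<in> trans X"
    and eq: "m2 + mset_set (preset X u) = m + mset_set (postset X u)"
    and iv: "ainv X b m x"
  shows "ainv X b m2 (x(u := x u + 1))"
  unfolding ainv_def
proof
  fix q assume q: "q \<in> places X"
  have c: "count m2 q + (if q \<in> preset X u then 1 else 0) = count m q + (if q \<in> postset X u then 1 else 0)"
  proof -
    have a: "count (mset_set (preset X u)) q = (if q \<in> preset X u then 1 else 0)"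
      using pn_finite_preset[OF pn] by simp
    have b: "count (mset_set (postset X u)) q = (if q \<in> postset X u then 1 else 0)"
      using pn_finite_postset[OF pn] by simp
    show ?thesis using arg_cong[OF eq, of "\<lambda>z. count z q"] unfolding count_union a b .
  qed
  have e1: "(q \<in> preset X u) = (u \<in> postset X q)" "(q \<in> postset X u) = (u \<in> preset X q)"
    unfolding preset_def postset_def by auto
  have "count m q + (\<Sum>v\<in>postset X q. x v) = b q + (\<Sum>v\<in>preset X q. x v)"
    using iv q unfolding ainv_def by blast
  then show "count m2 q + (\<Sum>v\<in>postset X q. (x(u := x u + 1)) v) = b q + (\<Sum>v\<in>preset X q. (x(u := x u + 1)) v)"
    using c e1 sum_upd1[OF pn_finite_preset[OF pn], of x u q] sum_upd1[OF pn_finite_postset[OF pn], of x u q]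
    by (auto split: if_splits)
qed

lemma inv_reach:
  assumes pn: "petri_net X" and r: "reach X m0 m" and iv: "ainv X b m0 x0"
  shows "\<exists>x. ainv X b m x"
  using r iv unfolding reach_def
proof (induction rule: rtranclp_induct)
  case base then show ?case by blast
next
  case (step y z)
  then obtain x where "ainv X b y x" by blast
  moreover from step(2) obtain u where "u \<in> trans X"
    "z + mset_set (preset X u) = y + mset_set (postset X u)" by (auto elim: fire_elim)
  ultimately show ?case using inv_step[OF pn] by blast
qed

lemma pWF_pre_ne:
  assumes "pWF X" "u \<in> trans X" shows "preset X u \<noteq> {}"
proof -
  have "u \<in> nodes X" using assms(2) by (simp add: nodes_def)
  then obtain i where q: "i \<in> inp X" "(i,u) \<in> (flow X)\<^sup>*"
    using assms(1) unfolding pWF_def wf_conn_def by blast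
  have "i \<in> places X" using q(1) assms(1) unfolding pWF_def by auto
  then have "u \<noteq> i" using assms unfolding pWF_def petri_net_def by auto
  then obtain y where "(y,u) \<in> flow X" using q(2) by (metis rtranclE)
  then show ?thesis unfolding preset_def by auto
qed

locale andnet =
  fixes X :: "('n,'z) net_scheme"
  assumes pw: "pWF X" and wfl: "wf (flow X)"
    and cin: "\<And>q. q \<in> places X \<Longrightarrow> (if q \<in> inp X then 1 else 0) + card (preset X q) = 1"
    and cout: "\<And>q. q \<in> places X \<Longrightarrow> (if q \<in> outp X then 1 else 0) + card (postset X q) = 1"
begin

lemma pn: "petri_net X" using pw by (rule pWF_pn)

lemma pre_in: "q \<in> places X \<Longrightarrow> q \<in> inp X \<Longrightarrow> preset X q = {}"
  using cin[of q] pn_finite_preset[OF pn, of q] by auto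

lemma pre_nin: "q \<in> places X \<Longrightarrow> q \<notin> inp X \<Longrightarrow> \<exists>w. preset X q = {w}"
  using cin[of q] by (auto simp: card_1_singleton_iff)

lemma post_cons: "u \<in> trans X \<Longrightarrow> q \<in> preset X u \<Longrightarrow> q \<in> places X \<and> q \<notin> outp X \<and> postset X q = {u}"
proof -
  assume u: "u \<in> trans X" and q: "q \<in> preset X u"
  have qp: "q \<in> places X" using pn_preset_trans[OF pn u] q by auto
  have uq: "u \<in> postset X q" using q unfolding preset_def postset_def by auto
  then have "postset X q \<noteq> {}" by auto
  then have "card (postset X q) \<noteq> 0" using pn_finite_postset[OF pn, of q] by simp
  then have "q \<notin> outp X" "card (postset X q) = 1" using cout[OF qp] by (auto split: if_splits)
  then show ?thesis using qp uq by (metis card_1_singletonE singletonD)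
qed

lemma bound:
  assumes iv: "ainv X b m x" and bdef: "\<And>q. b q = (if q \<in> inp X then k else 0) + (if q \<in> outp X then c else 0)"
  shows "u \<in> trans X \<Longrightarrow> x u \<le> k"
proof (induction u rule: wf_induct[OF wf_trancl[OF wfl]])
  case (1 u)
  obtain q where q: "q \<in> preset X u" using pWF_pre_ne[OF pw 1(2)] by blast
  have qi: "q \<in> places X" "q \<notin> outp X" "postset X q = {u}" using post_cons[OF 1(2) q] by auto
  have e: "count m q + x u = b q + (\<Sum>v\<in>preset X q. x v)" using iv qi unfolding ainv_def by auto
  show ?case
  proof (cases "q \<in> inp X")
    case True
    then show ?thesis using e pre_in[OF qi(1) True] bdef[of q] qi by simp
  next
    case False
    then obtain w where w: "preset X q = {w}" using pre_nin[OF qi(1)] by blast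
    have wq: "(w,q) \<in> flow X" using w unfolding preset_def by auto
    have "(q,u) \<in> flow X" using q unfolding preset_def by auto
    with wq have "(w,u) \<in> (flow X)\<^sup>+" by auto
    moreover have "w \<in> trans X" using pn_preset_place[OF pn qi(1)] w by auto
    ultimately have "x w \<le> k" using 1(1) by blast
    then show ?thesis using e w bdef[of q] False qi by simp
  qed
qed

lemma sum_const_on: "(\<And>v. v \<in> A \<Longrightarrow> x v = (k::nat)) \<Longrightarrow> (\<Sum>v\<in>A. x v) = card A * k"
  by (simp add: sum.cong[of A A x "\<lambda>_. k"])

lemma card_io: "q \<in> places X \<Longrightarrow> card (preset X q) = 1 - (if q \<in> inp X then 1 else 0)"
  "q \<in> places X \<Longrightarrow> card (postset X q) = 1 - (if q \<in> outp X then 1 else 0)"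
  using cin[of q] cout[of q] by (auto split: if_splits)

lemma phase2:
  assumes kk: "k' \<le> k" and bdef: "\<And>q. b q = (if q \<in> inp X then k else 0)"
  shows "ainv X b (m + repeat_mset k' (mset_set (outp X))) x \<Longrightarrow> (\<forall>u\<in>trans X. x u \<le> k) \<Longrightarrow> marking X m
    \<Longrightarrow> reach X m (repeat_mset (k - k') (mset_set (outp X)))"
proof (induction "\<Sum>u\<in>trans X. k - x u" arbitrary: m x rule: less_induct)
  case less
  let ?O = "mset_set (outp X)"
  have fO: "finite (outp X)" using pWF_finite_outp[OF pw] .
  have Op: "outp X \<subseteq> places X" using pw unfolding pWF_def by auto
  have Ip: "inp X \<subseteq> places X" using pw unfolding pWF_def by auto
  show ?case
  proof (cases "\<forall>u\<in>trans X. x u = k")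
    case True
    have "m = repeat_mset (k - k') ?O"
    proof (rule mset_eq_count)
      fix q
      show "count m q = count (repeat_mset (k - k') ?O) q"
      proof (cases "q \<in> places X")
        case True
        have e: "count (m + repeat_mset k' ?O) q + (\<Sum>v\<in>postset X q. x v) = b q + (\<Sum>v\<in>preset X q. x v)"
          using less(2) True unfolding ainv_def by blast
        have s1: "(\<Sum>v\<in>postset X q. x v) = card (postset X q) * k"
          by (rule sum_const_on) (use \<open>\<forall>u\<in>trans X. x u = k\<close> pn_postset_place[OF pn True] in auto)
        have s2: "(\<Sum>v\<in>preset X q. x v) = card (preset X q) * k"
          by (rule sum_const_on) (use \<open>\<forall>u\<in>trans X. x u = k\<close> pn_preset_place[OF pn True] in auto)
        show ?thesis using e unfolding s1 s2 card_io[OF True] bdef using fO kk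
          by (auto split: if_splits)
      next
        case False
        then have "q \<notin># m" using less(4) unfolding marking_def by auto
        moreover have "q \<notin> outp X" using False Op by auto
        ultimately show ?thesis using fO by (simp add: not_in_iff)
      qed
    qed
    then show ?thesis by simp
  next
    case False
    define S where "S = {u\<in>trans X. x u < k}"
    obtain u0 where "u0 \<in> S" using False less(3) unfolding S_def by force
    then obtain z where zS: "z \<in> S" and zmin: "\<And>y. (y, z) \<in> (flow X)\<^sup>+ \<Longrightarrow> y \<notin> S"
      using wfE_min[OF wf_trancl[OF wfl]] by metis
    have zt: "z \<in> trans X" and zk: "x z < k" using zS unfolding S_def by auto
    have en: "count m q \<ge> 1" if q: "q \<in> preset X z" for q
    proof -
      have qi: "q \<in> places X" "q \<notin> outp X" "postset X q = {z}" using post_cons[OF zt q] by auto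
      have e: "count (m + repeat_mset k' ?O) q + x z = b q + (\<Sum>v\<in>preset X q. x v)"
        using less(2) qi unfolding ainv_def by auto
      have c0: "count (repeat_mset k' ?O) q = 0" using qi(2) fO by simp
      have e2: "count m q + x z = b q + (\<Sum>v\<in>preset X q. x v)" using e c0 by (auto simp del: count_repeat_mset)
      show ?thesis
      proof (cases "q \<in> inp X")
        case True
        then have "count m q + x z = k" using e2 pre_in[OF qi(1) True] bdef[of q] by simp
        then show ?thesis using zk by linarith
      next
        case False
        then obtain w where w: "preset X q = {w}" using pre_nin[OF qi(1)] by blast
        have wq: "(w,q) \<in> flow X" using w unfolding preset_def by auto
        have "(q,z) \<in> flow X" using q unfolding preset_def by auto
        with wq have "(w,z) \<in> (flow X)\<^sup>+" by auto
        then have "w \<notin> S" by (rule zmin)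
        moreover have "w \<in> trans X" using pn_preset_place[OF pn qi(1)] w by auto
        ultimately have "x w \<ge> k" unfolding S_def by auto
        moreover have "count m q + x z = x w" using e2 w bdef[of q] False by simp
        ultimately show ?thesis using zk by linarith
      qed
    qed
    have sub: "mset_set (preset X z) \<subseteq># m"
      unfolding subseteq_mset_def
    proof
      fix q show "count (mset_set (preset X z)) q \<le> count m q"
        using en[of q] pn_finite_preset[OF pn, of z] by (cases "q \<in> preset X z") auto
    qed
    define m2 where "m2 = m - mset_set (preset X z) + mset_set (postset X z)"
    have eq2: "m2 + mset_set (preset X z) = m + mset_set (postset X z)"
      unfolding m2_def using sub by (rule diff_add_cancel_sub)
    have f2: "fire X m m2" by (rule fire_intro[OF zt sub eq2])
    define x2 where "x2 = x(z := x z + 1)"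
    have iv2: "ainv X b (m2 + repeat_mset k' ?O) x2"
      unfolding x2_def
      by (rule inv_step[OF pn zt _ less(2)]) (use eq2 in \<open>simp add: add_ac\<close>)
    have b2: "\<forall>u\<in>trans X. x2 u \<le> k" using less(3) zk unfolding x2_def by auto
    have mk2: "marking X m2"
    proof -
      have "set_mset m2 \<subseteq> set_mset m \<union> postset X z"
        unfolding m2_def using pn_finite_postset[OF pn, of z]
        by (auto dest: in_diffD)
      then show ?thesis using less(4) pn_postset_trans[OF pn zt] unfolding marking_def by blast
    qed
    have ft: "finite (trans X)" using pn unfolding petri_net_def by simp
    have "(\<Sum>u\<in>trans X. k - x2 u) < (\<Sum>u\<in>trans X. k - x u)"
    proof -
      have a: "(\<Sum>u\<in>trans X. k - x2 u) = (k - x2 z) + (\<Sum>u\<in>trans X - {z}. k - x2 u)"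
        using ft zt by (simp add: sum.remove)
      have b: "(\<Sum>u\<in>trans X. k - x u) = (k - x z) + (\<Sum>u\<in>trans X - {z}. k - x u)"
        using ft zt by (simp add: sum.remove)
      have c: "(\<Sum>u\<in>trans X - {z}. k - x2 u) = (\<Sum>u\<in>trans X - {z}. k - x u)"
        unfolding x2_def by (rule sum.cong) auto
      show ?thesis unfolding a b c using zk unfolding x2_def by simp
    qed
    then have "reach X m2 (repeat_mset (k - k') ?O)" using less(1) iv2 b2 mk2 by blast
    then show ?thesis using f2 by (meson fire_reach reach_trans)
  qed
qed

theorem and_sound: "sub_sound_p X"
  unfolding sub_sound_p_def
proof (intro allI impI)
  fix k k' m'
  assume kk: "k' \<le> k" and mk: "marking X m'"
    and r: "reach X (repeat_mset k (mset_set (inp X))) (m' + repeat_mset k' (mset_set (outp X)))"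
  define b where "b q = (if q \<in> inp X then k else 0)" for q
  have fI: "finite (inp X)" using pWF_finite_inp[OF pw] .
  have "ainv X b (repeat_mset k (mset_set (inp X))) (\<lambda>_. 0)"
    unfolding ainv_def b_def using fI by simp
  then obtain x where iv: "ainv X b (m' + repeat_mset k' (mset_set (outp X))) x"
    using inv_reach[OF pn r] by blast
  have bd: "\<forall>u\<in>trans X. x u \<le> k"
    using bound[OF iv, of k 0] unfolding b_def by auto
  show "reach X m' (repeat_mset (k - k') (mset_set (outp X)))"
    by (rule phase2[OF kk _ iv bd mk]) (simp add: b_def)
qed

end


lemma pc_simps[simp]:
  "places (pc N) = Inl ` places N \<union> {Inr False, Inr True}"
  "trans (pc N) = Inl ` trans N"
  "inp (pc N) = {Inr False}"
  "outp (pc N) = {Inr True}"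
  "flow (pc N) = map_prod Inl Inl ` flow N \<union> {(Inr False, Inl t) | t. t \<in> inp N}
                   \<union> {(Inl t, Inr True) | t. t \<in> outp N}"
  unfolding pc_def by simp_all

lemma pc_preset_Inl: "preset (pc N) (Inl x) = Inl ` preset N x \<union> (if x \<in> inp N then {Inr False} else {})"
  unfolding preset_def by auto
lemma pc_postset_Inl: "postset (pc N) (Inl x) = Inl ` postset N x \<union> (if x \<in> outp N then {Inr True} else {})"
  unfolding postset_def by auto
lemma pc_preset_Inr: "preset (pc N) (Inr False) = {}" "preset (pc N) (Inr True) = Inl ` outp N"
  unfolding preset_def by auto
lemma pc_postset_Inr: "postset (pc N) (Inr True) = {}" "postset (pc N) (Inr False) = Inl ` inp N"
  unfolding postset_def by auto

lemma rtrancl_map_prod: "(a,b) \<in> r\<^sup>* \<Longrightarrow> (f a, f b) \<in> (map_prod f f ` r)\<^sup>*"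
proof (induction rule: rtrancl_induct)
  case base then show ?case by simp
next
  case (step y z)
  then have "(f y, f z) \<in> map_prod f f ` r" by force
  with step show ?case by (meson rtrancl.rtrancl_into_rtrancl)
qed

lemma tWF_pn: "tWF X \<Longrightarrow> petri_net X" unfolding tWF_def by simp

lemma pc_pWF:
  assumes tw: "tWF N" shows "pWF (pc N)"
proof -
  have pn: "petri_net N" using tw by (rule tWF_pn)
  have io: "inp N \<subseteq> trans N" "outp N \<subseteq> trans N" "inp N \<noteq> {}" "outp N \<noteq> {}"
    using tw unfolding tWF_def wf_conn_def by auto
  have pn2: "petri_net (pc N)"
    using pn io(1,2) unfolding petri_net_def by auto
  let ?F = "flow (pc N)"
  have sub: "map_prod Inl Inl ` flow N \<subseteq> ?F" by (simp add: Un_assoc)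
  have lift: "(a,b) \<in> (flow N)\<^sup>* \<Longrightarrow> (Inl a, Inl b) \<in> ?F\<^sup>*" for a b
    using rtrancl_mono[OF sub] rtrancl_map_prod[of a b "flow N" Inl] by blast
  have fwd: "\<exists>i\<in>inp N. (i, y) \<in> (flow N)\<^sup>*" if "y \<in> nodes N" for y
    using tw that unfolding tWF_def wf_conn_def by blast
  have bwd: "\<exists>q\<in>outp N. (y, q) \<in> (flow N)\<^sup>*" if "y \<in> nodes N" for y
    using tw that unfolding tWF_def wf_conn_def by blast
  have inN: "i \<in> inp N \<Longrightarrow> i \<in> nodes N" for i using io unfolding nodes_def by auto
  have outN: "i \<in> outp N \<Longrightarrow> i \<in> nodes N" for i using io unfolding nodes_def by auto
  have A: "(Inr False, Inl y) \<in> ?F\<^sup>*" if yN: "y \<in> nodes N" for y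
  proof -
    obtain i where i: "i \<in> inp N" "(i,y) \<in> (flow N)\<^sup>*" using fwd[OF yN] by blast
    have "(Inr False, Inl i) \<in> ?F" using i by auto
    then show ?thesis using lift[OF i(2)] by (meson converse_rtrancl_into_rtrancl)
  qed
  have B: "(Inl y, Inr True) \<in> ?F\<^sup>*" if yN: "y \<in> nodes N" for y
  proof -
    obtain q where q: "q \<in> outp N" "(y,q) \<in> (flow N)\<^sup>*" using bwd[OF yN] by blast
    have "(Inl q, Inr True) \<in> ?F" using q by auto
    then show ?thesis using lift[OF q(2)] by (meson rtrancl.rtrancl_into_rtrancl)
  qed
  obtain i0 where i0: "i0 \<in> inp N" using io by blast
  have C: "(Inr False, Inr True) \<in> ?F\<^sup>*" using A[OF inN[OF i0]] B[OF inN[OF i0]] by (meson rtrancl_trans)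
  have nd: "nodes (pc N) = Inl ` nodes N \<union> {Inr False, Inr True}" unfolding nodes_def by auto
  have wc: "wf_conn (pc N)" unfolding wf_conn_def
    using A B C by (auto simp: nd)
  show ?thesis unfolding pWF_def using pn2 wc by simp
qed

lemma AND_andnet: assumes "AND_net N" "pWF N" shows "andnet N"
proof
  show "pWF N" by fact
  have pn: "petri_net N" using assms(2) by (rule pWF_pn)
  show "wf (flow N)" using assms(1) pn_finite_flow[OF pn] unfolding AND_net_def
    by (simp add: finite_acyclic_wf)
  fix q assume q: "q \<in> places N"
  show "(if q \<in> inp N then 1 else 0) + card (preset N q) = 1"
    using assms(1) q unfolding AND_net_def by auto
  show "(if q \<in> outp N then 1 else 0) + card (postset N q) = 1"
    using assms(1) q unfolding AND_net_def by auto
qed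

lemma wf_pc_flow:
  fixes N :: "'n net"
  assumes "wf (flow N)" shows "wf (flow (pc N))"
proof -
  let ?R0 = "map_prod Inl Inl ` flow N :: (('n + bool) \<times> ('n + bool)) set"
  let ?E1 = "{(Inr False, Inl t) | t. t \<in> inp N} :: (('n + bool) \<times> ('n + bool)) set"
  let ?E2 = "{(Inl t, Inr True) | t. t \<in> outp N} :: (('n + bool) \<times> ('n + bool)) set"
  have w0: "wf ?R0" using assms by (rule wf_map_prod_image) simp
  have w1: "wf ?E1"
    by (rule wf_subset[OF wf_measure[of "\<lambda>x. case x of Inl _ \<Rightarrow> 1 | Inr _ \<Rightarrow> (0::nat)"]]) auto
  have w2: "wf ?E2"
    by (rule wf_subset[OF wf_measure[of "\<lambda>x. case x of Inl _ \<Rightarrow> 0 | Inr _ \<Rightarrow> (1::nat)"]]) auto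
  have w01: "wf (?E1 \<union> ?R0)" by (rule wf_Un[OF w1 w0]) auto
  have w012: "wf ((?E1 \<union> ?R0) \<union> ?E2)" by (rule wf_Un[OF w01 w2]) auto
  have "flow (pc N) = (?E1 \<union> ?R0) \<union> ?E2" by auto
  then show ?thesis using w012 by simp
qed

lemma tAND11_andnet:
  assumes "N \<in> tAND11" shows "andnet (pc N)"
proof -
  have an: "AND_net N" and tw: "tWF N" and ci: "card (inp N) = 1" and co: "card (outp N) = 1"
    using assms unfolding tAND11_def by auto
  have pn: "petri_net N" using tw by (rule tWF_pn)
  have io: "inp N \<subseteq> trans N" "outp N \<subseteq> trans N" using tw unfolding tWF_def by auto
  have disj: "places N \<inter> trans N = {}" using pn unfolding petri_net_def by auto
  show ?thesis
  proof
    show "pWF (pc N)" using pc_pWF[OF tw] .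
    show "wf (flow (pc N))"
      using an pn_finite_flow[OF pn] unfolding AND_net_def
      by (intro wf_pc_flow) (simp add: finite_acyclic_wf)
    fix q assume q: "q \<in> places (pc N)"
    show "(if q \<in> inp (pc N) then 1 else 0) + card (preset (pc N) q) = 1"
    proof -
      consider (a) q0 where "q = Inl q0" "q0 \<in> places N" | (b) "q = Inr False" | (c) "q = Inr True"
        using q by auto
      then show ?thesis
      proof cases
        case a
        then have "q0 \<notin> inp N" using io disj by auto
        then show ?thesis using a an unfolding AND_net_def
          by (auto simp: pc_preset_Inl card_image)
      next
        case b then show ?thesis by (simp add: pc_preset_Inr)
      next
        case c then show ?thesis using co by (simp add: pc_preset_Inr card_image)
      qed
    qed
    show "(if q \<in> outp (pc N) then 1 else 0) + card (postset (pc N) q) = 1"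
    proof -
      consider (a) q0 where "q = Inl q0" "q0 \<in> places N" | (b) "q = Inr False" | (c) "q = Inr True"
        using q by auto
      then show ?thesis
      proof cases
        case a
        then have "q0 \<notin> outp N" using io disj by auto
        then show ?thesis using a an unfolding AND_net_def
          by (auto simp: pc_postset_Inl card_image)
      next
        case b then show ?thesis using ci by (simp add: pc_postset_Inr card_image)
      next
        case c then show ?thesis by (simp add: pc_postset_Inr)
      qed
    qed
  qed
qed

lemma pAND_sound: "N \<in> pAND \<Longrightarrow> sub_sound_p N"
  unfolding pAND_def using AND_andnet andnet.and_sound by blast

lemma tAND11_sound: "N \<in> tAND11 \<Longrightarrow> sub_sound_p (pc N)"
  using tAND11_andnet andnet.and_sound by blast

lemma pOR11_sound: assumes "N \<in> pOR11" shows "sub_sound_p N"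
proof -
  have or: "OR_net N" and pw: "pWF N" and ci: "card (inp N) = 1" and co: "card (outp N) = 1"
    using assms unfolding pOR11_def by auto
  obtain i where i: "inp N = {i}" using ci by (auto simp: card_1_singleton_iff)
  obtain o1 where o1: "outp N = {o1}" using co by (auto simp: card_1_singleton_iff)
  have pn: "petri_net N" using pw by (rule pWF_pn)
  have io: "inp N \<subseteq> places N" "outp N \<subseteq> places N" using pw unfolding pWF_def by auto
  have disj: "places N \<inter> trans N = {}" using pn unfolding petri_net_def by auto
  show ?thesis
  proof (rule SM_sound[OF pw i o1])
    fix u assume u: "u \<in> trans N"
    then have "u \<notin> inp N" "u \<notin> outp N" using io disj by auto
    then show "card (preset N u) = 1 \<and> card (postset N u) = 1"
      using or u unfolding OR_net_def by auto
  qed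
qed

lemma tOR_sound: fixes N :: "'n net" assumes "N \<in> tOR" shows "sub_sound_p (pc N)"
proof -
  have or: "OR_net N" and tw: "tWF N" using assms unfolding tOR_def by auto
  have pn: "petri_net N" using tw by (rule tWF_pn)
  show ?thesis
  proof (rule SM_sound[OF pc_pWF[OF tw]])
    show "inp (pc N) = {Inr False}" by simp
    show "outp (pc N) = {Inr True}" by simp
    fix u assume "u \<in> trans (pc N)"
    then obtain u0 where u0: "u = Inl u0" "u0 \<in> trans N" by auto
    have f1: "finite (Inl ` preset N u0 :: ('n+bool) set)" using pn_finite_preset[OF pn] by simp
    have f2: "finite (Inl ` postset N u0 :: ('n+bool) set)" using pn_finite_postset[OF pn] by simp
    have "card (preset (pc N) u) = 1"
    proof (cases "u0 \<in> inp N")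
      case True
      then have "card (preset N u0) = 0" using or u0 unfolding OR_net_def by auto
      then have "preset N u0 = {}" using pn_finite_preset[OF pn] by simp
      then show ?thesis using True u0 by (simp add: pc_preset_Inl)
    next
      case False
      then have "card (preset N u0) = 1" using or u0 unfolding OR_net_def by auto
      then show ?thesis using False u0 by (simp add: pc_preset_Inl card_image)
    qed
    moreover have "card (postset (pc N) u) = 1"
    proof (cases "u0 \<in> outp N")
      case True
      then have "card (postset N u0) = 0" using or u0 unfolding OR_net_def by auto
      then have "postset N u0 = {}" using pn_finite_postset[OF pn] by simp
      then show ?thesis using True u0 by (simp add: pc_postset_Inl)
    next
      case False
      then have "card (postset N u0) = 1" using or u0 unfolding OR_net_def by auto
      then show ?thesis using False u0 by (simp add: pc_postset_Inl card_image)
    qed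
    ultimately show "card (preset (pc N) u) = 1 \<and> card (postset (pc N) u) = 1" by simp
  qed
qed


locale psub =
  fixes N M :: "'n net" and p :: 'n
  assumes pwN: "pWF N" and pwM: "pWF M" and disj: "nodes N \<inter> nodes M = {}"
    and pP: "p \<in> places N" and ssN: "sub_sound_p N" and ssM: "sub_sound_p M"
begin

abbreviation "N' \<equiv> subst_place N p M"

lemma pnN: "petri_net N" using pwN by (rule pWF_pn)
lemma pnM: "petri_net M" using pwM by (rule pWF_pn)

lemma ioM: "inp M \<subseteq> places M" "outp M \<subseteq> places M" using pwM unfolding pWF_def by auto
lemma ioN: "inp N \<subseteq> places N" "outp N \<subseteq> places N" using pwN unfolding pWF_def by auto
lemma fin: "finite (inp M)" "finite (outp M)" "finite (inp N)" "finite (outp N)"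
  using pWF_finite_inp pWF_finite_outp pwN pwM by auto

lemma flowN: "(a,b) \<in> flow N \<Longrightarrow> a \<in> nodes N \<and> b \<in> nodes N" using pn_flow_nodes[OF pnN] .
lemma flowM: "(a,b) \<in> flow M \<Longrightarrow> a \<in> nodes M \<and> b \<in> nodes M" using pn_flow_nodes[OF pnM] .

lemma nd: "x \<in> places N \<Longrightarrow> x \<in> nodes N" "x \<in> trans N \<Longrightarrow> x \<in> nodes N"
  "x \<in> places M \<Longrightarrow> x \<in> nodes M" "x \<in> trans M \<Longrightarrow> x \<in> nodes M"
  unfolding nodes_def by auto

lemma dj: "x \<in> nodes N \<Longrightarrow> x \<notin> nodes M" using disj by auto

lemma pN': "places N' = (places N - {p}) \<union> places M" "trans N' = trans N \<union> trans M"
  "flow N' = {e \<in> flow N. fst e \<noteq> p \<and> snd e \<noteq> p} \<union> flow M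
            \<union> {(t, p') | t p'. t \<in> preset N p \<and> p' \<in> inp M}
            \<union> {(p', t) | p' t. p' \<in> outp M \<and> t \<in> postset N p}"
  "inp N' = (if p \<in> inp N then (inp N - {p}) \<union> inp M else inp N)"
  "outp N' = (if p \<in> outp N then (outp N - {p}) \<union> outp M else outp N)"
  unfolding subst_place_def by simp_all

lemma pre_N:
  assumes u: "u \<in> trans N"
  shows "preset N' u = (preset N u - {p}) \<union> (if p \<in> preset N u then outp M else {})"
proof -
  have uN: "u \<in> nodes N" using nd u by auto
  have up: "u \<noteq> p" using u pP pnN unfolding petri_net_def by auto
  show ?thesis
    using uN up dj ioM flowM nd
    unfolding preset_def postset_def pN' by (auto, blast+)
qed

lemma post_N:
  assumes u: "u \<in> trans N"
  shows "postset N' u = (postset N u - {p}) \<union> (if p \<in> postset N u then inp M else {})"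
proof -
  have uN: "u \<in> nodes N" using nd u by auto
  have up: "u \<noteq> p" using u pP pnN unfolding petri_net_def by auto
  show ?thesis
    using uN up dj ioM flowM nd
    unfolding preset_def postset_def pN' by (auto, blast+)
qed

lemma pre_M:
  assumes u: "u \<in> trans M"
  shows "preset N' u = preset M u" "postset N' u = postset M u"
proof -
  have uM: "u \<in> nodes M" using nd u by auto
  have "u \<notin> inp M" "u \<notin> outp M" using u ioM pnM unfolding petri_net_def by auto
  moreover have "postset N p \<subseteq> nodes N" "preset N p \<subseteq> nodes N"
    using flowN unfolding postset_def preset_def by auto
  ultimately show "preset N' u = preset M u" "postset N' u = postset M u"
    using uM dj flowN
    unfolding preset_def postset_def pN' by auto
qed

lemma finpre: "finite (preset N u)" "finite (postset N u)" "finite (preset M u)" "finite (postset M u)"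
  by (simp_all add: pn_finite_preset[OF pnN] pn_finite_postset[OF pnN] pn_finite_preset[OF pnM] pn_finite_postset[OF pnM])

lemma fire_M_lift: "fire M a b \<Longrightarrow> fire N' a b"
proof (erule fire_elim)
  fix u assume u: "u \<in> trans M" "mset_set (preset M u) \<subseteq># a"
    "b + mset_set (preset M u) = a + mset_set (postset M u)"
  show "fire N' a b"
    by (rule fire_intro[of u]) (use u pre_M[OF u(1)] in \<open>auto simp: pN'\<close>)
qed

lemma reach_M_lift: "reach M a b \<Longrightarrow> reach N' a b"
  unfolding reach_def
proof (induction rule: rtranclp_induct)
  case base then show ?case by simp
next
  case (step y z) then show ?case using fire_M_lift by (meson rtranclp.rtrancl_into_rtrancl)
qed

definition psi :: "'n multiset \<Rightarrow> 'n multiset" where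
  "psi z = filter_mset (\<lambda>q. q \<noteq> p) z + repeat_mset (count z p) (mset_set (outp M))"

lemma IOM: "q \<in> inp M \<Longrightarrow> q \<in> nodes M" "q \<in> outp M \<Longrightarrow> q \<in> nodes M"
  using ioM nd by auto

lemma pM: "p \<notin> nodes M" using pP nd dj by auto

lemma prepostN: "u \<in> trans N \<Longrightarrow> preset N u \<subseteq> nodes N" "u \<in> trans N \<Longrightarrow> postset N u \<subseteq> nodes N"
  using pn_preset_trans[OF pnN] pn_postset_trans[OF pnN] nd by blast+

lemma sim_fire:
  assumes f: "fire N y z" shows "reach N' (psi y) (psi z)"
proof -
  obtain u where u: "u \<in> trans N" "mset_set (preset N u) \<subseteq># y"
    "z + mset_set (preset N u) = y + mset_set (postset N u)" using f by (auto elim: fire_elim)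
  define a :: nat where "a = (if p \<in> preset N u then 1 else 0)"
  define b :: nat where "b = (if p \<in> postset N u then 1 else 0)"
  have eqc: "count z q + (if q \<in> preset N u then 1 else 0) = count y q + (if q \<in> postset N u then 1 else 0)" for q
    using arg_cong[OF u(3), of "\<lambda>m. count m q"] unfolding count_union cmset[OF finpre(1)] cmset[OF finpre(2)] .
  have subc: "(if q \<in> preset N u then 1 else 0) \<le> count y q" for q
    using u(2) unfolding subseteq_mset_def cmset[OF finpre(1)] by metis
  have zp: "count z p \<ge> b" using eqc[of p] subc[of p] unfolding b_def by (auto split: if_splits)
  define w0 where "w0 = filter_mset (\<lambda>q. q \<noteq> p) z + repeat_mset (count z p - b) (mset_set (outp M))"
  have uN': "u \<in> trans N'" using u(1) by (simp add: pN')
  have fpre': "finite (preset N' u)" "finite (postset N' u)"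
    using pre_N[OF u(1)] post_N[OF u(1)] finpre fin by auto
  have nM: "q \<in> outp M \<or> q \<in> inp M \<Longrightarrow> q \<notin> preset N u \<and> q \<notin> postset N u \<and> q \<noteq> p" for q
    using IOM pM prepostN[OF u(1)] dj by blast
  have cpre': "count (mset_set (preset N' u)) q = (if q \<in> preset N u \<and> q \<noteq> p then 1 else 0)
      + (if p \<in> preset N u \<and> q \<in> outp M then 1 else 0)" for q
    using fpre' nM[of q] fin unfolding pre_N[OF u(1)] by auto
  have cpost': "count (mset_set (postset N' u)) q = (if q \<in> postset N u \<and> q \<noteq> p then 1 else 0)
      + (if p \<in> postset N u \<and> q \<in> inp M then 1 else 0)" for q
    using fpre' nM[of q] fin unfolding post_N[OF u(1)] by auto
  have cO: "count (mset_set (outp M)) q = (if q \<in> outp M then 1 else 0)" for q using fin by simp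
  have cI: "count (mset_set (inp M)) q = (if q \<in> inp M then 1 else 0)" for q using fin by simp
  have fire1: "fire N' (psi y) (w0 + repeat_mset b (mset_set (inp M)))"
  proof (rule fire_intro[OF uN'])
    show "mset_set (preset N' u) \<subseteq># psi y"
      unfolding subseteq_mset_def
    proof
      fix q
      show "count (mset_set (preset N' u)) q \<le> count (psi y) q"
        using subc[of q] subc[of p] nM[of q] unfolding cpre' psi_def
        by (auto simp: cO split: if_splits)
    qed
    show "w0 + repeat_mset b (mset_set (inp M)) + mset_set (preset N' u) = psi y + mset_set (postset N' u)"
    proof (rule mset_eq_count)
      fix q
      show "count (w0 + repeat_mset b (mset_set (inp M)) + mset_set (preset N' u)) q =
            count (psi y + mset_set (postset N' u)) q"
        using eqc[of q] eqc[of p] subc[of p] zp nM[of q] unfolding cpre' cpost' psi_def w0_def count_union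
          count_filter_mset count_repeat_mset cO cI b_def
        by (auto split: if_splits)
    qed
  qed
  have "reach N' (w0 + repeat_mset b (mset_set (inp M))) (psi z)"
  proof (cases "b = 0")
    case True then show ?thesis unfolding w0_def psi_def by simp
  next
    case False
    then have b1: "b = 1" unfolding b_def by (simp split: if_splits)
    have "reach N' (mset_set (inp M)) (mset_set (outp M))"
      using reach_M_lift[OF sub_sound_one[OF pwM ssM]] .
    then have "reach N' (mset_set (inp M) + w0) (mset_set (outp M) + w0)" by (rule reach_mono)
    moreover have "psi z = mset_set (outp M) + w0"
    proof -
      obtain c where cz: "count z p = Suc c" using zp b1 by (metis Suc_le_D One_nat_def)
      show ?thesis unfolding psi_def w0_def b1 cz by (simp add: add_ac)
    qed
    ultimately show ?thesis using b1 by (simp add: add_ac)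
  qed
  with fire1 show ?thesis by (meson fire_reach reach_trans)
qed

lemma sim_reach: "reach N y z \<Longrightarrow> reach N' (psi y) (psi z)"
  unfolding reach_def
proof (induction rule: rtranclp_induct)
  case base then show ?case by simp
next
  case (step y' z') then show ?case using sim_fire[OF step(2)] unfolding reach_def by simp
qed

lemma nM: "u \<in> trans N \<Longrightarrow> q \<in> places M \<Longrightarrow> q \<notin> preset N u \<and> q \<notin> postset N u \<and> q \<noteq> p"
  using pM prepostN nd dj by blast

lemma cpreN: "u \<in> trans N \<Longrightarrow> count (mset_set (preset N' u)) q = (if q \<in> preset N u \<and> q \<noteq> p then 1 else 0)
      + (if p \<in> preset N u \<and> q \<in> outp M then 1 else 0)"
  using nM[of u q] ioM fin finpre unfolding pre_N by auto

lemma cpostN: "u \<in> trans N \<Longrightarrow> count (mset_set (postset N' u)) q = (if q \<in> postset N u \<and> q \<noteq> p then 1 else 0)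
      + (if p \<in> postset N u \<and> q \<in> inp M then 1 else 0)"
  using nM[of u q] ioM fin finpre unfolding post_N by auto

definition fN :: "'n multiset \<Rightarrow> 'n multiset" where "fN m = filter_mset (\<lambda>q. q \<notin> places M) m"
definition fM :: "'n multiset \<Rightarrow> 'n multiset" where "fM m = filter_mset (\<lambda>q. q \<in> places M) m"

lemma cfN[simp]: "count (fN m) q = (if q \<in> places M then 0 else count m q)" unfolding fN_def by simp
lemma cfM[simp]: "count (fM m) q = (if q \<in> places M then count m q else 0)" unfolding fM_def by simp

lemma cIO: "count (mset_set (inp M)) q = (if q \<in> inp M then 1 else 0)"
  "count (mset_set (outp M)) q = (if q \<in> outp M then 1 else 0)"
  "count (mset_set (inp N)) q = (if q \<in> inp N then 1 else 0)"
  "count (mset_set (outp N)) q = (if q \<in> outp N then 1 else 0)"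
  using fin by simp_all

lemma PM: "places N \<inter> places M = {}" using disj unfolding nodes_def by auto
lemma pnotM: "p \<notin> places M" using pP PM by auto

lemma proj:
  assumes "reach N' m0 m" "m0 = repeat_mset k (mset_set (inp N'))"
  shows "\<exists>J J'. J' \<le> J \<and> reach N (repeat_mset k (mset_set (inp N))) (fN m + replicate_mset (J - J') p)
     \<and> reach M (repeat_mset J (mset_set (inp M))) (fM m + repeat_mset J' (mset_set (outp M)))"
  using assms unfolding reach_def
proof (induction rule: rtranclp_induct)
  case base
  show ?case
  proof (cases "p \<in> inp N")
    case True
    have fI: "finite (inp N - {p} \<union> inp M)" using fin by simp
    have e1: "fN m0 + replicate_mset (k - 0) p = repeat_mset k (mset_set (inp N))"
    proof (rule mset_eq_count)
      fix q show "count (fN m0 + replicate_mset (k - 0) p) q = count (repeat_mset k (mset_set (inp N))) q"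
        using True base ioN ioM PM fI unfolding cIO by (auto simp: pN' count_replicate_mset cmset[OF fI])
    qed
    have e2: "fM m0 + repeat_mset 0 (mset_set (outp M)) = repeat_mset k (mset_set (inp M))"
    proof (rule mset_eq_count)
      fix q show "count (fM m0 + repeat_mset 0 (mset_set (outp M))) q = count (repeat_mset k (mset_set (inp M))) q"
        using True base ioN ioM PM fI unfolding cIO by (auto simp: pN' cmset[OF fI])
    qed
    show ?thesis by (rule exI[of _ k], rule exI[of _ 0]) (simp only: e1 e2, simp)
  next
    case False
    have fI: "finite (inp N')" using fin False by (simp add: pN')
    have e1: "fN m0 + replicate_mset (0 - 0) p = repeat_mset k (mset_set (inp N))"
    proof (rule mset_eq_count)
      fix q show "count (fN m0 + replicate_mset (0 - 0) p) q = count (repeat_mset k (mset_set (inp N))) q"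
        using False base ioN ioM PM fI unfolding cIO by (auto simp: pN' cmset[OF fI])
    qed
    have e2: "fM m0 + repeat_mset 0 (mset_set (outp M)) = repeat_mset 0 (mset_set (inp M))"
    proof (rule mset_eq_count)
      fix q show "count (fM m0 + repeat_mset 0 (mset_set (outp M))) q = count (repeat_mset 0 (mset_set (inp M))) q"
        using False base ioN ioM PM fI unfolding cIO by (auto simp: pN' cmset[OF fI])
    qed
    show ?thesis by (rule exI[of _ 0], rule exI[of _ 0]) (simp only: e1 e2, simp)
  qed
next
  case (step m m2)
  obtain J J' where IH: "J' \<le> J" "reach N (repeat_mset k (mset_set (inp N))) (fN m + replicate_mset (J - J') p)"
    "reach M (repeat_mset J (mset_set (inp M))) (fM m + repeat_mset J' (mset_set (outp M)))"
    using step(3,4) unfolding reach_def by blast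
  obtain u where u: "u \<in> trans N'" "mset_set (preset N' u) \<subseteq># m"
    "m2 + mset_set (preset N' u) = m + mset_set (postset N' u)" using step(2) by (auto elim: fire_elim)
  have eqc: "count m2 q + count (mset_set (preset N' u)) q = count m q + count (mset_set (postset N' u)) q" for q
    using arg_cong[OF u(3), of "\<lambda>m. count m q"] by simp
  have subc: "count (mset_set (preset N' u)) q \<le> count m q" for q
    using u(2) unfolding subseteq_mset_def by blast
  show ?case
  proof (cases "u \<in> trans M")
    case True
    have pre: "preset N' u = preset M u" "postset N' u = postset M u" using pre_M[OF True] by auto
    have ppl: "preset M u \<subseteq> places M" "postset M u \<subseteq> places M"
      using pn_preset_trans[OF pnM True] pn_postset_trans[OF pnM True] by auto
    have c1: "fN m2 = fN m"
    proof (rule mset_eq_count)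
      fix q show "count (fN m2) q = count (fN m) q" using eqc[of q] ppl unfolding pre count_union cmset[OF finpre(3)] cmset[OF finpre(4)] by (auto split: if_splits)
    qed
    have "fire M (fM m + repeat_mset J' (mset_set (outp M))) (fM m2 + repeat_mset J' (mset_set (outp M)))"
    proof (rule fire_intro[of u])
      show "u \<in> trans M" by fact
      show "mset_set (preset M u) \<subseteq># fM m + repeat_mset J' (mset_set (outp M))"
        unfolding subseteq_mset_def
      proof
        fix q show "count (mset_set (preset M u)) q \<le> count (fM m + repeat_mset J' (mset_set (outp M))) q"
          using subc[of q] ppl unfolding pre count_union cmset[OF finpre(3)] cmset[OF finpre(4)] by (auto split: if_splits)
      qed
      show "fM m2 + repeat_mset J' (mset_set (outp M)) + mset_set (preset M u) =
            fM m + repeat_mset J' (mset_set (outp M)) + mset_set (postset M u)"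
      proof (rule mset_eq_count)
        fix q show "count (fM m2 + repeat_mset J' (mset_set (outp M)) + mset_set (preset M u)) q =
            count (fM m + repeat_mset J' (mset_set (outp M)) + mset_set (postset M u)) q"
          using eqc[of q] ppl unfolding pre count_union cmset[OF finpre(3)] cmset[OF finpre(4)] by (auto split: if_splits)
      qed
    qed
    then show ?thesis using IH c1 unfolding reach_def
      by (metis rtranclp.rtrancl_into_rtrancl)
  next
    case False
    then have uN: "u \<in> trans N" using u(1) by (simp add: pN')
    define a :: nat where "a = (if p \<in> preset N u then 1 else 0)"
    define b :: nat where "b = (if p \<in> postset N u then 1 else 0)"
    have OP0: "J' + a \<le> J"
    proof (cases "p \<in> preset N u")
      case True
      have Osub: "mset_set (outp M) \<subseteq># fM m"
        unfolding subseteq_mset_def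
      proof
        fix q show "count (mset_set (outp M)) q \<le> count (fM m) q"
          using subc[of q] True ioM nM[OF uN, of q] unfolding cpreN[OF uN] cIO by auto
      qed
      have eqq: "fM m + repeat_mset J' (mset_set (outp M)) = (fM m - mset_set (outp M)) + repeat_mset (Suc J') (mset_set (outp M))"
      proof (rule mset_eq_count)
        fix q have "count (mset_set (outp M)) q \<le> count (fM m) q" using Osub by (simp add: subseteq_mset_def)
        then show "count (fM m + repeat_mset J' (mset_set (outp M))) q =
          count ((fM m - mset_set (outp M)) + repeat_mset (Suc J') (mset_set (outp M))) q" by simp
      qed
      have mk: "marking M (fM m - mset_set (outp M))"
        unfolding marking_def fM_def by (auto dest: in_diffD)
      have "Suc J' \<le> J" using overprod[OF pwM ssM mk] IH(3) unfolding eqq by blast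
      then show ?thesis unfolding a_def b_def using True by simp
    next
      case False then show ?thesis using IH(1) unfolding a_def by simp
    qed
    have OP: "J' + a \<le> J + b" using OP0 by simp
    have fN2: "fire N (fN m + replicate_mset (J - J') p) (fN m2 + replicate_mset (J + b - (J' + a)) p)"
    proof (rule fire_intro[OF uN])
      show "mset_set (preset N u) \<subseteq># fN m + replicate_mset (J - J') p"
        unfolding subseteq_mset_def
      proof
        fix q show "count (mset_set (preset N u)) q \<le> count (fN m + replicate_mset (J - J') p) q"
        proof (cases "q \<in> preset N u")
          case False then show ?thesis using finpre(1)[of u] by simp
        next
          case True
          note qpre = True
          show ?thesis
          proof (cases "q = p")
            case True
            then have "1 \<le> J - J'" using OP0 qpre unfolding a_def b_def by (auto split: if_splits)
            then show ?thesis using True qpre finpre(1)[of u] pnotM by (simp add: count_replicate_mset)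
          next
            case False
            have "q \<notin> places M" using nM[OF uN, of q] qpre by blast
            moreover have "q \<in># m" using subc[of q] qpre False unfolding cpreN[OF uN] by (auto intro: count_ge1_in)
            ultimately show ?thesis using qpre finpre(1)[of u] False by (simp add: count_replicate_mset)
          qed
        qed
      qed
      show "fN m2 + replicate_mset (J + b - (J' + a)) p + mset_set (preset N u) =
            fN m + replicate_mset (J - J') p + mset_set (postset N u)"
      proof (rule mset_eq_count)
        fix q
        have e: "count m2 q + count (mset_set (preset N' u)) q = count m q + count (mset_set (postset N' u)) q"
          by (rule eqc)
        show "count (fN m2 + replicate_mset (J + b - (J' + a)) p + mset_set (preset N u)) q =
            count (fN m + replicate_mset (J - J') p + mset_set (postset N u)) q"
        proof (cases "q \<in> places M")
          case True
          then show ?thesis using nM[OF uN True] finpre(1,2)[of u] by (simp add: count_replicate_mset)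
        next
          case False
          note qM = False
          show ?thesis
          proof (cases "q = p")
            case True
            have "p \<notin> outp M" "p \<notin> inp M" using pnotM ioM by auto
            then have "count m2 p = count m p" using e unfolding True cpreN[OF uN] cpostN[OF uN] by simp
            then show ?thesis using True pnotM OP IH(1) finpre(1,2)[of u] unfolding a_def b_def
              by (simp add: count_replicate_mset split: if_splits)
          next
            case False
            have "q \<notin> outp M" "q \<notin> inp M" using qM ioM by auto
            then show ?thesis using e qM False unfolding cpreN[OF uN] cpostN[OF uN]
              by (simp add: count_replicate_mset cmset[OF finpre(1)] cmset[OF finpre(2)])
          qed
        qed
      qed
    qed
    have eM: "fM m + repeat_mset J' (mset_set (outp M)) + repeat_mset b (mset_set (inp M)) =
              fM m2 + repeat_mset (J' + a) (mset_set (outp M))"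
    proof (rule mset_eq_count)
      fix q show "count (fM m + repeat_mset J' (mset_set (outp M)) + repeat_mset b (mset_set (inp M))) q =
              count (fM m2 + repeat_mset (J' + a) (mset_set (outp M))) q"
      proof (cases "q \<in> places M")
        case False
        then have "q \<notin> inp M" "q \<notin> outp M" using ioM by auto
        then show ?thesis using False by (simp add: cIO)
      next
        case True
        have e: "count m2 q + a * count (mset_set (outp M)) q = count m q + b * count (mset_set (inp M)) q"
          using eqc[of q] nM[OF uN True] unfolding cpreN[OF uN] cpostN[OF uN] a_def b_def cIO
          by (auto split: if_splits)
        show ?thesis using True e by (simp add: algebra_simps)
      qed
    qed
    have rM: "reach M (repeat_mset (J + b) (mset_set (inp M))) (fM m2 + repeat_mset (J' + a) (mset_set (outp M)))"
      using reach_mono[OF IH(3), of "repeat_mset b (mset_set (inp M))"] unfolding eM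
      by (simp add: repeat_mset_distrib)
    have rN: "reach N (repeat_mset k (mset_set (inp N))) (fN m2 + replicate_mset (J + b - (J' + a)) p)"
      using IH(2) fN2 by (rule reach_fire_trans)
    show ?thesis
      apply (rule exI[of _ "J + b"], rule exI[of _ "J' + a"])
      using OP rN rM unfolding reach_def by (intro conjI)
  qed
qed

theorem subst_place_sound: "sub_sound_p N'"
  unfolding sub_sound_p_def
proof (intro allI impI)
  fix k k' m'
  assume kk: "k' \<le> k" and mk: "marking N' m'"
    and r: "reach N' (repeat_mset k (mset_set (inp N'))) (m' + repeat_mset k' (mset_set (outp N')))"
  obtain J J' where J: "J' \<le> J"
    and rN: "reach N (repeat_mset k (mset_set (inp N))) (fN (m' + repeat_mset k' (mset_set (outp N'))) + replicate_mset (J - J') p)"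
    and rM: "reach M (repeat_mset J (mset_set (inp M))) (fM (m' + repeat_mset k' (mset_set (outp N'))) + repeat_mset J' (mset_set (outp M)))"
    using proj[OF r refl] by blast
  have mP: "set_mset m' \<subseteq> (places N - {p}) \<union> places M" using mk unfolding marking_def by (simp add: pN')
  have cm'p: "count m' p = 0" using mP pnotM by (meson DiffD2 UnE count_inI singletonI subsetD)
  have msplit: "m' = fN m' + fM m'" by (rule mset_eq_count) simp
  have mkN: "marking N (fN m' + replicate_mset c p)" for c
    using mP pP unfolding marking_def fN_def by auto
  have mkM: "marking M (fM m')" unfolding marking_def fM_def by auto
  have psi1: "psi (fN m' + replicate_mset c p) = fN m' + repeat_mset c (mset_set (outp M))" for c
    by (rule mset_eq_count) (use cm'p pnotM in \<open>auto simp: psi_def count_replicate_mset cIO\<close>)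
  have lift: "reach N' m' (fN m' + repeat_mset c (mset_set (outp M)))"
    if "reach M (fM m') (repeat_mset c (mset_set (outp M)))" for c
    using reach_mono[OF reach_M_lift[OF that], of "fN m'"] msplit by (simp add: add_ac)
  show "reach N' m' (repeat_mset (k - k') (mset_set (outp N')))"
  proof (cases "p \<in> outp N")
    case False
    have oN': "outp N' = outp N" using False by (simp add: pN')
    have e1: "fN (m' + repeat_mset k' (mset_set (outp N'))) + replicate_mset (J - J') p =
              (fN m' + replicate_mset (J - J') p) + repeat_mset k' (mset_set (outp N))"
      by (rule mset_eq_count) (use ioN PM in \<open>auto simp: oN' cIO\<close>)
    have e2: "fM (m' + repeat_mset k' (mset_set (outp N'))) = fM m'"
      by (rule mset_eq_count) (use ioN PM in \<open>auto simp: oN' cIO\<close>)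
    have sN: "reach N (fN m' + replicate_mset (J - J') p) (repeat_mset (k - k') (mset_set (outp N)))"
      using ssN kk mkN rN unfolding e1 sub_sound_p_def by blast
    have sM: "reach M (fM m') (repeat_mset (J - J') (mset_set (outp M)))"
      using ssM J mkM rM unfolding e2 sub_sound_p_def by blast
    have "psi (repeat_mset (k - k') (mset_set (outp N))) = repeat_mset (k - k') (mset_set (outp N))"
      by (rule mset_eq_count) (use False pnotM in \<open>auto simp: psi_def cIO\<close>)
    then have "reach N' (fN m' + repeat_mset (J - J') (mset_set (outp M))) (repeat_mset (k - k') (mset_set (outp N)))"
      using sim_reach[OF sN] unfolding psi1 by simp
    then show ?thesis unfolding oN' using lift[OF sM] by (meson reach_trans)
  next
    case True
    have oN': "outp N' = (outp N - {p}) \<union> outp M" using True by (simp add: pN')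
    have fO: "finite (outp N - {p} \<union> outp M)" using fin by simp
    have cO': "count (mset_set (outp N')) q = (if q \<in> outp N \<and> q \<noteq> p then 1 else 0) + (if q \<in> outp M then 1 else 0)" for q
      unfolding oN' cmset[OF fO] using ioN ioM PM by auto
    have e2: "fM (m' + repeat_mset k' (mset_set (outp N'))) + repeat_mset J' (mset_set (outp M)) =
              fM m' + repeat_mset (J' + k') (mset_set (outp M))"
      by (rule mset_eq_count) (use ioN ioM PM in \<open>auto simp: cO' cIO algebra_simps\<close>)
    have J2: "J' + k' \<le> J" using overprod[OF pwM ssM mkM] rM unfolding e2 by blast
    have e1: "fN (m' + repeat_mset k' (mset_set (outp N'))) + replicate_mset (J - J') p =
              (fN m' + replicate_mset (J - (J' + k')) p) + repeat_mset k' (mset_set (outp N))"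
      by (rule mset_eq_count) (use ioN ioM PM True J2 pnotM in \<open>auto simp: cO' cIO count_replicate_mset\<close>)
    have sN: "reach N (fN m' + replicate_mset (J - (J' + k')) p) (repeat_mset (k - k') (mset_set (outp N)))"
      using ssN kk mkN rN unfolding e1 sub_sound_p_def by blast
    have sM: "reach M (fM m') (repeat_mset (J - (J' + k')) (mset_set (outp M)))"
      using ssM J2 mkM rM unfolding e2 sub_sound_p_def by blast
    have "psi (repeat_mset (k - k') (mset_set (outp N))) = repeat_mset (k - k') (mset_set (outp N'))"
      by (rule mset_eq_count) (use True pnotM in \<open>auto simp: psi_def cIO cO'\<close>)
    then have "reach N' (fN m' + repeat_mset (J - (J' + k')) (mset_set (outp M))) (repeat_mset (k - k') (mset_set (outp N')))"
      using sim_reach[OF sN] unfolding psi1 by simp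
    then show ?thesis using lift[OF sM] by (meson reach_trans)
  qed
qed

end


lemma cnt_Inl[simp]: "count (image_mset Inl A) (Inl q) = count A q"
  "count (image_mset Inl A) (Inr b) = 0"
  by (induction A) auto

lemma cnt_projl[simp]: "count (image_mset projl (filter_mset isl z)) q = count z (Inl q)"
  by (induction z) (auto simp: isl_def split: sum.splits)

locale tsub =
  fixes N M :: "'n net" and t :: 'n
  assumes pwN: "pWF N" and twM: "tWF M" and disj: "nodes N \<inter> nodes M = {}"
    and tT: "t \<in> trans N" and ssN: "sub_sound_p N" and ssM: "sub_sound_p (pc M)"
begin

abbreviation "N' \<equiv> subst_trans N t M"

lemma pnN: "petri_net N" using pwN by (rule pWF_pn)
lemma pnM: "petri_net M" using twM by (rule tWF_pn)
lemma pwpc: "pWF (pc M)" using pc_pWF[OF twM] .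

lemma ioM: "inp M \<subseteq> trans M" "outp M \<subseteq> trans M" using twM unfolding tWF_def by auto
lemma ioN: "inp N \<subseteq> places N" "outp N \<subseteq> places N" using pwN unfolding pWF_def by auto
lemma fin: "finite (inp N)" "finite (outp N)"
  using pWF_finite_inp pWF_finite_outp pwN by auto

lemma flowN: "(a,b) \<in> flow N \<Longrightarrow> a \<in> nodes N \<and> b \<in> nodes N" using pn_flow_nodes[OF pnN] .
lemma flowM: "(a,b) \<in> flow M \<Longrightarrow> a \<in> nodes M \<and> b \<in> nodes M" using pn_flow_nodes[OF pnM] .

lemma nd: "x \<in> places N \<Longrightarrow> x \<in> nodes N" "x \<in> trans N \<Longrightarrow> x \<in> nodes N"
  "x \<in> places M \<Longrightarrow> x \<in> nodes M" "x \<in> trans M \<Longrightarrow> x \<in> nodes M"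
  unfolding nodes_def by auto

lemma dj: "x \<in> nodes N \<Longrightarrow> x \<notin> nodes M" using disj by auto

lemma tN': "places N' = places N \<union> places M" "trans N' = (trans N - {t}) \<union> trans M"
  "flow N' = {e \<in> flow N. fst e \<noteq> t \<and> snd e \<noteq> t} \<union> flow M
            \<union> {(q, t') | q t'. q \<in> preset N t \<and> t' \<in> inp M}
            \<union> {(t', q) | t' q. t' \<in> outp M \<and> q \<in> postset N t}"
  "inp N' = inp N" "outp N' = outp N"
  using tT ioN pnN unfolding subst_trans_def petri_net_def by auto

lemma prtN: "preset N t \<subseteq> places N" "postset N t \<subseteq> places N"
  using pn_preset_trans[OF pnN tT] pn_postset_trans[OF pnN tT] .

lemma finpre: "finite (preset N u)" "finite (postset N u)" "finite (preset M u)" "finite (postset M u)"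
  by (simp_all add: pn_finite_preset[OF pnN] pn_finite_postset[OF pnN] pn_finite_preset[OF pnM] pn_finite_postset[OF pnM])

lemma pre_N:
  assumes u: "u \<in> trans N" "u \<noteq> t"
  shows "preset N' u = preset N u" "postset N' u = postset N u"
proof -
  have uN: "u \<in> nodes N" using nd u by auto
  have "u \<notin> places N" using u pnN unfolding petri_net_def by auto
  then have "u \<notin> preset N t" "u \<notin> postset N t" using prtN by auto
  then show "preset N' u = preset N u" "postset N' u = postset N u"
    using uN u dj ioM flowM nd unfolding preset_def postset_def tN' by (auto, blast+)
qed

lemma pre_M:
  assumes u: "u \<in> trans M"
  shows "preset N' u = preset M u \<union> (if u \<in> inp M then preset N t else {})"
    "postset N' u = postset M u \<union> (if u \<in> outp M then postset N t else {})"
proof -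
  have uM: "u \<in> nodes M" using nd u by auto
  have "u \<notin> nodes N" using uM dj by blast
  then have "u \<noteq> t" "u \<notin> preset N t" "u \<notin> postset N t" using tT prtN nd by auto
  then show "preset N' u = preset M u \<union> (if u \<in> inp M then preset N t else {})"
    "postset N' u = postset M u \<union> (if u \<in> outp M then postset N t else {})"
    using uM dj flowN unfolding preset_def postset_def tN' by auto
qed

lemma MnN: "q \<in> places M \<Longrightarrow> q \<notin> places N" "q \<in> trans M \<Longrightarrow> q \<notin> trans N"
  using nd dj by blast+

lemma pcM_pre: "u \<in> trans M \<Longrightarrow> count (mset_set (preset (pc M) (Inl u))) x =
   (case x of Inl q \<Rightarrow> (if q \<in> preset M u then 1 else 0) | Inr b \<Rightarrow> (if \<not> b \<and> u \<in> inp M then 1 else 0))"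
  using finpre(3)[of u] by (auto simp: pc_preset_Inl cmset split: sum.splits)

lemma pcM_post: "u \<in> trans M \<Longrightarrow> count (mset_set (postset (pc M) (Inl u))) x =
   (case x of Inl q \<Rightarrow> (if q \<in> postset M u then 1 else 0) | Inr b \<Rightarrow> (if b \<and> u \<in> outp M then 1 else 0))"
  using finpre(4)[of u] by (auto simp: pc_postset_Inl cmset split: sum.splits)

lemma cpreM: "u \<in> trans M \<Longrightarrow> count (mset_set (preset N' u)) q =
   (if q \<in> preset M u then 1 else 0) + (if u \<in> inp M \<and> q \<in> preset N t then 1 else 0)"
proof -
  assume u: "u \<in> trans M"
  have d: "preset M u \<inter> preset N t = {}" using pn_preset_trans[OF pnM u] prtN MnN by blast
  show ?thesis unfolding pre_M[OF u] using d finpre(1,3) by (auto simp: cmset)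
qed

lemma cpostM: "u \<in> trans M \<Longrightarrow> count (mset_set (postset N' u)) q =
   (if q \<in> postset M u then 1 else 0) + (if u \<in> outp M \<and> q \<in> postset N t then 1 else 0)"
proof -
  assume u: "u \<in> trans M"
  have d: "postset M u \<inter> postset N t = {}" using pn_postset_trans[OF pnM u] prtN MnN by blast
  show ?thesis unfolding pre_M[OF u] using d finpre(2,4) by (auto simp: cmset)
qed

definition phi :: "('n + bool) multiset \<Rightarrow> 'n multiset" where
  "phi z = image_mset projl (filter_mset isl z) + repeat_mset (count z (Inr False)) (mset_set (preset N t))
     + repeat_mset (count z (Inr True)) (mset_set (postset N t))"

lemma cphi: "count (phi z) q = count z (Inl q) + count z (Inr False) * (if q \<in> preset N t then 1 else 0)
   + count z (Inr True) * (if q \<in> postset N t then 1 else 0)"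
  unfolding phi_def using finpre(1,2)[of t] by (simp add: cmset)

lemma fire_lift:
  assumes f: "fire (pc M) z z2" shows "fire N' (phi z) (phi z2)"
proof -
  obtain v where v: "v \<in> trans (pc M)" "mset_set (preset (pc M) v) \<subseteq># z"
    "z2 + mset_set (preset (pc M) v) = z + mset_set (postset (pc M) v)" using f by (auto elim: fire_elim)
  obtain u where u: "v = Inl u" "u \<in> trans M" using v(1) by auto
  have eqc: "count z2 x + count (mset_set (preset (pc M) (Inl u))) x = count z x + count (mset_set (postset (pc M) (Inl u))) x" for x
    using arg_cong[OF v(3), of "\<lambda>m. count m x"] u by simp
  have subc: "count (mset_set (preset (pc M) (Inl u))) x \<le> count z x" for x
    using v(2) u unfolding subseteq_mset_def by blast
  have uN': "u \<in> trans N'" using u by (simp add: tN')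
  have nPM: "q \<in> preset M u \<or> q \<in> postset M u \<Longrightarrow> q \<notin> preset N t \<and> q \<notin> postset N t" for q
    using pn_preset_trans[OF pnM u(2)] pn_postset_trans[OF pnM u(2)] prtN MnN by blast
  show ?thesis
  proof (rule fire_intro[OF uN'])
    show "mset_set (preset N' u) \<subseteq># phi z"
      unfolding subseteq_mset_def
    proof
      fix q
      show "count (mset_set (preset N' u)) q \<le> count (phi z) q"
        using subc[of "Inl q"] subc[of "Inr False"] nPM[of q]
        unfolding cpreM[OF u(2)] cphi pcM_pre[OF u(2)]
        by (auto split: if_splits simp del: count_greater_zero_iff)
    qed
    show "phi z2 + mset_set (preset N' u) = phi z + mset_set (postset N' u)"
    proof (rule mset_eq_count)
      fix q
      show "count (phi z2 + mset_set (preset N' u)) q = count (phi z + mset_set (postset N' u)) q"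
        using eqc[of "Inl q"] eqc[of "Inr False"] eqc[of "Inr True"] nPM[of q]
        unfolding count_union cpreM[OF u(2)] cpostM[OF u(2)] cphi pcM_pre[OF u(2)] pcM_post[OF u(2)]
        by (auto split: if_splits simp: algebra_simps)
    qed
  qed
qed

lemma reach_lift: "reach (pc M) z z2 \<Longrightarrow> reach N' (phi z) (phi z2)"
  unfolding reach_def
proof (induction rule: rtranclp_induct)
  case base then show ?case by simp
next
  case (step y z) then show ?case using fire_lift by (meson rtranclp.rtrancl_into_rtrancl)
qed

definition fN :: "'n multiset \<Rightarrow> 'n multiset" where "fN m = filter_mset (\<lambda>q. q \<notin> places M) m"
definition fM :: "'n multiset \<Rightarrow> 'n multiset" where "fM m = filter_mset (\<lambda>q. q \<in> places M) m"

lemma cfN[simp]: "count (fN m) q = (if q \<in> places M then 0 else count m q)" unfolding fN_def by simp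
lemma cfM[simp]: "count (fM m) q = (if q \<in> places M then count m q else 0)" unfolding fM_def by simp

lemma cIO: "count (mset_set (inp N)) q = (if q \<in> inp N then 1 else 0)"
  "count (mset_set (outp N)) q = (if q \<in> outp N then 1 else 0)"
  "count (mset_set (preset N t)) q = (if q \<in> preset N t then 1 else 0)"
  "count (mset_set (postset N t)) q = (if q \<in> postset N t then 1 else 0)"
  using fin finpre by simp_all

lemma overprod_pc:
  assumes "reach (pc M) (repeat_mset J {#Inr False#}) (image_mset Inl a + repeat_mset J' {#Inr True#})"
    "set_mset a \<subseteq> places M"
  shows "J' \<le> J"
proof (rule overprod[OF pwpc ssM])
  show "marking (pc M) (image_mset Inl a)" using assms(2) unfolding marking_def by auto
  show "reach (pc M) (repeat_mset J (mset_set (inp (pc M)))) (image_mset Inl a + repeat_mset J' (mset_set (outp (pc M))))"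
    using assms(1) by simp
qed

lemma proj:
  assumes "reach N' m0 m" "m0 = repeat_mset k (mset_set (inp N))"
  shows "\<exists>J J'. J' \<le> J \<and> reach N (repeat_mset k (mset_set (inp N))) (fN m + repeat_mset (J - J') (mset_set (postset N t)))
     \<and> reach (pc M) (repeat_mset J {#Inr False#}) (image_mset Inl (fM m) + repeat_mset J' {#Inr True#})"
  using assms unfolding reach_def
proof (induction rule: rtranclp_induct)
  case base
  have e1: "fN m0 = m0" by (rule mset_eq_count) (use base ioN MnN in \<open>auto simp: cIO\<close>)
  have e2: "fM m0 = {#}" by (rule mset_eq_count) (use base ioN MnN in \<open>auto simp: cIO\<close>)
  show ?case by (rule exI[of _ 0], rule exI[of _ 0]) (simp only: e1 e2, simp add: base)
next
  case (step m m2)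
  obtain J J' where IH: "J' \<le> J" "reach N (repeat_mset k (mset_set (inp N))) (fN m + repeat_mset (J - J') (mset_set (postset N t)))"
    "reach (pc M) (repeat_mset J {#Inr False#}) (image_mset Inl (fM m) + repeat_mset J' {#Inr True#})"
    using step(3,4) unfolding reach_def by blast
  obtain u where u: "u \<in> trans N'" "mset_set (preset N' u) \<subseteq># m"
    "m2 + mset_set (preset N' u) = m + mset_set (postset N' u)" using step(2) by (auto elim: fire_elim)
  have eqc: "count m2 q + count (mset_set (preset N' u)) q = count m q + count (mset_set (postset N' u)) q" for q
    using arg_cong[OF u(3), of "\<lambda>m. count m q"] by simp
  have subc: "count (mset_set (preset N' u)) q \<le> count m q" for q
    using u(2) unfolding subseteq_mset_def by blast
  show ?case
  proof (cases "u \<in> trans M")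
    case False
    then have uN: "u \<in> trans N" "u \<noteq> t" using u(1) by (auto simp: tN')
    have ppl: "preset N u \<subseteq> places N" "postset N u \<subseteq> places N"
      using pn_preset_trans[OF pnN uN(1)] pn_postset_trans[OF pnN uN(1)] by auto
    have c1: "fM m2 = fM m"
    proof (rule mset_eq_count)
      fix q show "count (fM m2) q = count (fM m) q"
        using eqc[of q] ppl MnN[of q] unfolding pre_N[OF uN] cmset[OF finpre(1)] cmset[OF finpre(2)]
        by (auto split: if_splits)
    qed
    have "fire N (fN m + repeat_mset (J - J') (mset_set (postset N t))) (fN m2 + repeat_mset (J - J') (mset_set (postset N t)))"
    proof (rule fire_intro[OF uN(1)])
      show "mset_set (preset N u) \<subseteq># fN m + repeat_mset (J - J') (mset_set (postset N t))"
        unfolding subseteq_mset_def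
      proof
        fix q show "count (mset_set (preset N u)) q \<le> count (fN m + repeat_mset (J - J') (mset_set (postset N t))) q"
          using subc[of q] ppl MnN[of q] unfolding pre_N[OF uN] cmset[OF finpre(1)] by (auto split: if_splits)
      qed
      show "fN m2 + repeat_mset (J - J') (mset_set (postset N t)) + mset_set (preset N u) =
            fN m + repeat_mset (J - J') (mset_set (postset N t)) + mset_set (postset N u)"
      proof (rule mset_eq_count)
        fix q show "count (fN m2 + repeat_mset (J - J') (mset_set (postset N t)) + mset_set (preset N u)) q =
            count (fN m + repeat_mset (J - J') (mset_set (postset N t)) + mset_set (postset N u)) q"
          using eqc[of q] ppl MnN[of q] unfolding pre_N[OF uN] count_union cmset[OF finpre(1)] cmset[OF finpre(2)]
          by (auto split: if_splits)
      qed
    qed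
    then show ?thesis using IH c1 unfolding reach_def by (metis rtranclp.rtrancl_into_rtrancl)
  next
    case True
    define i :: nat where "i = (if u \<in> inp M then 1 else 0)"
    define o1 :: nat where "o1 = (if u \<in> outp M then 1 else 0)"
    have ppl: "preset M u \<subseteq> places M" "postset M u \<subseteq> places M"
      using pn_preset_trans[OF pnM True] pn_postset_trans[OF pnM True] by auto
    have fpc: "fire (pc M) (image_mset Inl (fM m) + repeat_mset J' {#Inr True#} + repeat_mset i {#Inr False#})
                   (image_mset Inl (fM m2) + repeat_mset (J' + o1) {#Inr True#})"
    proof (rule fire_intro[of "Inl u"])
      show "Inl u \<in> trans (pc M)" using True by simp
      show "mset_set (preset (pc M) (Inl u)) \<subseteq># image_mset Inl (fM m) + repeat_mset J' {#Inr True#} + repeat_mset i {#Inr False#}"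
        unfolding subseteq_mset_def
      proof
        fix x show "count (mset_set (preset (pc M) (Inl u))) x \<le> count (image_mset Inl (fM m) + repeat_mset J' {#Inr True#} + repeat_mset i {#Inr False#}) x"
        proof (cases x)
          case (Inl q)
          show ?thesis
          proof (cases "q \<in> preset M u")
            case True
            then have "q \<in># m" using subc[of q] unfolding cpreM[OF \<open>u \<in> trans M\<close>] by (auto intro: count_ge1_in)
            then show ?thesis using True Inl ppl unfolding pcM_pre[OF \<open>u \<in> trans M\<close>] by auto
          next
            case False then show ?thesis using Inl unfolding pcM_pre[OF \<open>u \<in> trans M\<close>] by auto
          qed
        next
          case (Inr b) then show ?thesis unfolding pcM_pre[OF True] i_def by auto
        qed
      qed
      show "image_mset Inl (fM m2) + repeat_mset (J' + o1) {#Inr True#} + mset_set (preset (pc M) (Inl u)) =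
            image_mset Inl (fM m) + repeat_mset J' {#Inr True#} + repeat_mset i {#Inr False#} + mset_set (postset (pc M) (Inl u))"
      proof (rule mset_eq_count)
        fix x show "count (image_mset Inl (fM m2) + repeat_mset (J' + o1) {#Inr True#} + mset_set (preset (pc M) (Inl u))) x =
            count (image_mset Inl (fM m) + repeat_mset J' {#Inr True#} + repeat_mset i {#Inr False#} + mset_set (postset (pc M) (Inl u))) x"
        proof (cases x)
          case (Inl q)
          show ?thesis
          proof (cases "q \<in> places M")
            case True
            then have "q \<notin> preset N t" "q \<notin> postset N t" using prtN MnN by auto
            then show ?thesis using eqc[of q] Inl True unfolding count_union cpreM[OF \<open>u \<in> trans M\<close>] cpostM[OF \<open>u \<in> trans M\<close>]
                pcM_pre[OF \<open>u \<in> trans M\<close>] pcM_post[OF \<open>u \<in> trans M\<close>] by simp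
          next
            case False
            then show ?thesis using Inl ppl unfolding count_union pcM_pre[OF \<open>u \<in> trans M\<close>] pcM_post[OF \<open>u \<in> trans M\<close>]
              by auto
          qed
        next
          case (Inr b)
          then show ?thesis unfolding count_union pcM_pre[OF \<open>u \<in> trans M\<close>] pcM_post[OF \<open>u \<in> trans M\<close>] i_def o1_def
            by auto
        qed
      qed
    qed
    have rpc: "reach (pc M) (repeat_mset (J + i) {#Inr False#}) (image_mset Inl (fM m2) + repeat_mset (J' + o1) {#Inr True#})"
    proof -
      have "reach (pc M) (repeat_mset J {#Inr False#} + repeat_mset i {#Inr False#})
          (image_mset Inl (fM m) + repeat_mset J' {#Inr True#} + repeat_mset i {#Inr False#})"
        by (rule reach_mono[OF IH(3)])
      from reach_fire_trans[OF this fpc] show ?thesis unfolding repeat_mset_distrib .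
    qed
    have OP: "J' + o1 \<le> J + i" by (rule overprod_pc[OF rpc]) (auto simp: fM_def)
    have rN: "reach N (repeat_mset k (mset_set (inp N))) (fN m2 + repeat_mset (J + i - (J' + o1)) (mset_set (postset N t)))"
    proof (cases "u \<in> inp M")
      case False
      have "fN m2 + repeat_mset (J + i - (J' + o1)) (mset_set (postset N t)) = fN m + repeat_mset (J - J') (mset_set (postset N t))"
      proof (rule mset_eq_count)
        fix q show "count (fN m2 + repeat_mset (J + i - (J' + o1)) (mset_set (postset N t))) q = count (fN m + repeat_mset (J - J') (mset_set (postset N t))) q"
          using eqc[of q] False OP IH(1) ppl prtN MnN[of q] unfolding count_union cpreM[OF True] cpostM[OF True] i_def o1_def
          by (auto simp: cIO split: if_splits)
      qed
      then show ?thesis using IH(2) by simp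
    next
      case False': True
      have "fire N (fN m + repeat_mset (J - J') (mset_set (postset N t))) (fN m2 + repeat_mset (J + i - (J' + o1)) (mset_set (postset N t)))"
      proof (rule fire_intro[OF tT])
        show "mset_set (preset N t) \<subseteq># fN m + repeat_mset (J - J') (mset_set (postset N t))"
          unfolding subseteq_mset_def
        proof
          fix q show "count (mset_set (preset N t)) q \<le> count (fN m + repeat_mset (J - J') (mset_set (postset N t))) q"
            using subc[of q] False' prtN MnN[of q] unfolding cpreM[OF True] by (auto simp: cIO split: if_splits intro: count_ge1_in)
        qed
        show "fN m2 + repeat_mset (J + i - (J' + o1)) (mset_set (postset N t)) + mset_set (preset N t) =
              fN m + repeat_mset (J - J') (mset_set (postset N t)) + mset_set (postset N t)"
        proof (rule mset_eq_count)
          fix q show "count (fN m2 + repeat_mset (J + i - (J' + o1)) (mset_set (postset N t)) + mset_set (preset N t)) q =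
              count (fN m + repeat_mset (J - J') (mset_set (postset N t)) + mset_set (postset N t)) q"
            using eqc[of q] False' OP IH(1) ppl prtN MnN[of q] unfolding count_union cpreM[OF True] cpostM[OF True] i_def o1_def
            by (auto simp: cIO algebra_simps split: if_splits)
        qed
      qed
      from reach_fire_trans[OF IH(2) this] show ?thesis .
    qed
    show ?thesis
      apply (rule exI[of _ "J + i"], rule exI[of _ "J' + o1"])
      using OP rN rpc unfolding reach_def by (intro conjI)
  qed
qed

lemma phi_Inl: "phi (image_mset Inl a) = a"
  by (rule mset_eq_count) (simp add: cphi)

lemma phi_T: "phi (repeat_mset c {#Inr True#}) = repeat_mset c (mset_set (postset N t))"
  by (rule mset_eq_count) (simp add: cphi cIO)

lemma phi_F: "phi {#Inr False#} = mset_set (preset N t)"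
  by (rule mset_eq_count) (simp add: cphi cIO)

lemma t_reach: "reach N' (mset_set (preset N t)) (mset_set (postset N t))"
proof -
  have "reach (pc M) {#Inr False#} (repeat_mset 1 {#Inr True#})"
    using sub_sound_one[OF pwpc ssM] by simp
  from reach_lift[OF this] show ?thesis unfolding phi_F phi_T by simp
qed

lemma sim_fire: "fire N y z \<Longrightarrow> reach N' y z"
proof (erule fire_elim)
  fix u assume u: "u \<in> trans N" "mset_set (preset N u) \<subseteq># y"
    "z + mset_set (preset N u) = y + mset_set (postset N u)"
  have zeq: "z = y - mset_set (preset N u) + mset_set (postset N u)"
    using u(2,3) by (metis add_diff_cancel_right' subset_mset.add_diff_assoc2)
  show "reach N' y z"
  proof (cases "u = t")
    case True
    have "reach N' (mset_set (preset N t) + (y - mset_set (preset N t))) (mset_set (postset N t) + (y - mset_set (preset N t)))"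
      by (rule reach_mono[OF t_reach])
    moreover have "mset_set (preset N t) + (y - mset_set (preset N t)) = y" using u(2) True
      by (simp add: subset_mset.add_diff_inverse)
    ultimately show ?thesis using zeq True by (simp add: add_ac)
  next
    case False
    have "fire N' y z"
      by (rule fire_intro[of u]) (use u False pre_N[OF u(1) False] in \<open>auto simp: tN'\<close>)
    then show ?thesis by (rule fire_reach)
  qed
qed

lemma sim_reach: "reach N y z \<Longrightarrow> reach N' y z"
  unfolding reach_def
proof (induction rule: rtranclp_induct)
  case base then show ?case by simp
next
  case (step y' z') then show ?case using sim_fire[OF step(2)] unfolding reach_def by simp
qed

theorem subst_trans_sound: "sub_sound_p N'"
  unfolding sub_sound_p_def
proof (intro allI impI)
  fix k k' m'
  assume kk: "k' \<le> k" and mk: "marking N' m'"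
    and r: "reach N' (repeat_mset k (mset_set (inp N'))) (m' + repeat_mset k' (mset_set (outp N')))"
  obtain J J' where J: "J' \<le> J"
    and rN: "reach N (repeat_mset k (mset_set (inp N))) (fN (m' + repeat_mset k' (mset_set (outp N))) + repeat_mset (J - J') (mset_set (postset N t)))"
    and rM: "reach (pc M) (repeat_mset J {#Inr False#}) (image_mset Inl (fM (m' + repeat_mset k' (mset_set (outp N)))) + repeat_mset J' {#Inr True#})"
    using proj[OF r[unfolded tN'] refl] by blast
  have mP: "set_mset m' \<subseteq> places N \<union> places M" using mk unfolding marking_def by (simp add: tN')
  have msplit: "m' = fN m' + fM m'" by (rule mset_eq_count) simp
  have e1: "fN (m' + repeat_mset k' (mset_set (outp N))) + repeat_mset (J - J') (mset_set (postset N t)) =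
     (fN m' + repeat_mset (J - J') (mset_set (postset N t))) + repeat_mset k' (mset_set (outp N))"
    by (rule mset_eq_count) (use ioN MnN in \<open>auto simp: cIO\<close>)
  have e2: "fM (m' + repeat_mset k' (mset_set (outp N))) = fM m'"
    by (rule mset_eq_count) (use ioN MnN in \<open>auto simp: cIO\<close>)
  have mkN: "marking N (fN m' + repeat_mset (J - J') (mset_set (postset N t)))"
    using mP prtN finpre(2)[of t] unfolding marking_def fN_def by auto
  have sN: "reach N (fN m' + repeat_mset (J - J') (mset_set (postset N t))) (repeat_mset (k - k') (mset_set (outp N)))"
    using ssN kk mkN rN unfolding e1 sub_sound_p_def by blast
  have mkM: "marking (pc M) (image_mset Inl (fM m'))" unfolding marking_def fM_def by auto
  have "reach (pc M) (repeat_mset J (mset_set (inp (pc M)))) (image_mset Inl (fM m') + repeat_mset J' (mset_set (outp (pc M))))"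
    using rM unfolding e2 by simp
  then have "reach (pc M) (image_mset Inl (fM m')) (repeat_mset (J - J') (mset_set (outp (pc M))))"
    using ssM J mkM unfolding sub_sound_p_def by blast
  then have "reach N' (fM m') (repeat_mset (J - J') (mset_set (postset N t)))"
    using reach_lift phi_Inl phi_T by fastforce
  from reach_mono[OF this, of "fN m'"]
  have "reach N' m' (fN m' + repeat_mset (J - J') (mset_set (postset N t)))"
    using msplit by (simp add: add_ac)
  then show "reach N' m' (repeat_mset (k - k') (mset_set (outp N')))"
    using sim_reach[OF sN] unfolding tN' by (meson reach_trans)
qed

end


lemma path_sub:
  assumes F'def: "F' = {e \<in> R. fst e \<noteq> x \<and> snd e \<noteq> x} \<union> S \<union> {(a,b) | a b. (a,x) \<in> R \<and> b \<in> IS}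
                    \<union> {(b,a) | b a. b \<in> OS \<and> (x,a) \<in> R}"
    and noself: "(x,x) \<notin> R" and ISne: "IS \<noteq> {}"
    and IO: "\<And>b. b \<in> IS \<Longrightarrow> \<exists>ob\<in>OS. (b,ob) \<in> S\<^sup>*"
    and yz: "(y,z) \<in> R\<^sup>*"
  shows "y = z \<or> (\<forall>a \<in> (if y = x then OS else {y}). \<forall>b \<in> (if z = x then IS else {z}). (a,b) \<in> F'\<^sup>*)"
  using yz
proof (induction rule: rtrancl_induct)
  case base then show ?case by simp
next
  case (step z w)
  have SF: "S\<^sup>* \<subseteq> F'\<^sup>*" unfolding F'def by (rule rtrancl_mono) blast
  have edge: "\<forall>a \<in> (if z = x then OS else {z}). \<forall>b \<in> (if w = x then IS else {w}). (a,b) \<in> F'"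
    using step(2) noself unfolding F'def by auto
  show ?case
  proof (cases "y = z")
    case True
    then show ?thesis using edge by (metis r_into_rtrancl)
  next
    case False
    with step(3) have IH: "\<forall>a \<in> (if y = x then OS else {y}). \<forall>b \<in> (if z = x then IS else {z}). (a,b) \<in> F'\<^sup>*"
      by blast
    have "\<forall>a \<in> (if y = x then OS else {y}). \<forall>b \<in> (if w = x then IS else {w}). (a,b) \<in> F'\<^sup>*"
    proof (intro ballI)
      fix a b assume a: "a \<in> (if y = x then OS else {y})" and b: "b \<in> (if w = x then IS else {w})"
      show "(a,b) \<in> F'\<^sup>*"
      proof (cases "z = x")
        case True
        obtain c where c: "c \<in> IS" using ISne by blast
        obtain o1 where o1: "o1 \<in> OS" "(c,o1) \<in> S\<^sup>*" using IO[OF c] by blast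
        have ac: "(a,c) \<in> F'\<^sup>*" using IH a c True by auto
        have "(o1, b) \<in> F'" using edge o1 True b by auto
        then show ?thesis using ac SF o1(2) by (meson rtrancl_trans r_into_rtrancl subsetD)
      next
        case False
        have az: "(a,z) \<in> F'\<^sup>*" using IH a False by auto
        have "(z,b) \<in> F'" using edge b False by auto
        then show ?thesis using az by (meson rtrancl.rtrancl_into_rtrancl)
      qed
    qed
    then show ?thesis by blast
  qed
qed

lemma conn_sub:
  assumes F'def: "F' = {e \<in> R. fst e \<noteq> x \<and> snd e \<noteq> x} \<union> S \<union> {(a,b) | a b. (a,x) \<in> R \<and> b \<in> IS}
                    \<union> {(b,a) | b a. b \<in> OS \<and> (x,a) \<in> R}"
    and noself: "(x,x) \<notin> R" and ISne: "IS \<noteq> {}" and xN: "x \<in> VN"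
    and IO: "\<And>b. b \<in> IS \<Longrightarrow> \<exists>ob\<in>OS. (b,ob) \<in> S\<^sup>*"
    and cN: "\<And>y. y \<in> VN \<Longrightarrow> \<exists>i\<in>IN. (i,y) \<in> R\<^sup>*"
    and cM: "\<And>y. y \<in> VM \<Longrightarrow> \<exists>i\<in>IS. (i,y) \<in> S\<^sup>*"
    and y: "y \<in> (VN - {x}) \<union> VM"
  shows "\<exists>i \<in> (if x \<in> IN then (IN - {x}) \<union> IS else IN). (i,y) \<in> F'\<^sup>*"
proof -
  have SF: "S\<^sup>* \<subseteq> F'\<^sup>*" unfolding F'def by (rule rtrancl_mono) blast
  have ps: "y0 = z0 \<or> (\<forall>a \<in> (if y0 = x then OS else {y0}). \<forall>b \<in> (if z0 = x then IS else {z0}). (a,b) \<in> F'\<^sup>*)"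
    if "(y0,z0) \<in> R\<^sup>*" for y0 z0
    using F'def noself ISne IO that by (rule path_sub)
  have fromIS: "\<exists>i \<in> (if x \<in> IN then (IN - {x}) \<union> IS else IN). (i,c) \<in> F'\<^sup>*" if c: "c \<in> IS" for c
  proof (cases "x \<in> IN")
    case True then show ?thesis using c by auto
  next
    case False
    obtain i0 where i0: "i0 \<in> IN" "(i0, x) \<in> R\<^sup>*" using cN[OF xN] by blast
    have "i0 \<noteq> x" using i0 False by auto
    then have "(i0, c) \<in> F'\<^sup>*" using ps[OF i0(2)] c by auto
    then show ?thesis using False i0 by auto
  qed
  show ?thesis
  proof (cases "y \<in> VM")
    case True
    obtain c where c: "c \<in> IS" "(c,y) \<in> S\<^sup>*" using cM[OF True] by blast
    then show ?thesis using fromIS[OF c(1)] SF by (meson rtrancl_trans subsetD)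
  next
    case False
    then have yN: "y \<in> VN" "y \<noteq> x" using y by auto
    obtain i0 where i0: "i0 \<in> IN" "(i0, y) \<in> R\<^sup>*" using cN[OF yN(1)] by blast
    show ?thesis
    proof (cases "i0 = x")
      case True
      obtain c where c: "c \<in> IS" using ISne by blast
      obtain o1 where o1: "o1 \<in> OS" "(c,o1) \<in> S\<^sup>*" using IO[OF c] by blast
      have "(o1, y) \<in> F'\<^sup>*" using ps[OF i0(2)] True yN o1 by auto
      then have "(c, y) \<in> F'\<^sup>*" using o1 SF by (meson rtrancl_trans subsetD)
      moreover have "c \<in> (if x \<in> IN then (IN - {x}) \<union> IS else IN)" using True i0 c by auto
      ultimately show ?thesis by blast
    next
      case False
      have "i0 = y \<or> (i0, y) \<in> F'\<^sup>*" using ps[OF i0(2)] False yN by auto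
      then have "(i0, y) \<in> F'\<^sup>*" by auto
      moreover have "i0 \<in> (if x \<in> IN then (IN - {x}) \<union> IS else IN)" using False i0 by auto
      ultimately show ?thesis by blast
    qed
  qed
qed

lemma wf_conn_gen:
  assumes cN: "wf_conn N" and cM: "wf_conn M" and xN: "x \<in> nodes N" and noself: "(x,x) \<notin> flow N"
    and ioM: "inp M \<subseteq> nodes M" "outp M \<subseteq> nodes M"
    and fl: "flow N' = {e \<in> flow N. fst e \<noteq> x \<and> snd e \<noteq> x} \<union> flow M
            \<union> {(t, p') | t p'. t \<in> preset N x \<and> p' \<in> inp M}
            \<union> {(p', t) | p' t. p' \<in> outp M \<and> t \<in> postset N x}"
    and i: "inp N' = (if x \<in> inp N then (inp N - {x}) \<union> inp M else inp N)"
    and o: "outp N' = (if x \<in> outp N then (outp N - {x}) \<union> outp M else outp N)"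
    and nd: "nodes N' = (nodes N - {x}) \<union> nodes M"
  shows "wf_conn N'"
proof -
  let ?F = "flow N'"
  have F'def: "?F = {e \<in> flow N. fst e \<noteq> x \<and> snd e \<noteq> x} \<union> flow M \<union> {(a,b) | a b. (a,x) \<in> flow N \<and> b \<in> inp M}
                    \<union> {(b,a) | b a. b \<in> outp M \<and> (x,a) \<in> flow N}"
    unfolding fl preset_def postset_def by auto
  have F'c: "?F\<inverse> = {e \<in> (flow N)\<inverse>. fst e \<noteq> x \<and> snd e \<noteq> x} \<union> (flow M)\<inverse> \<union> {(a,b) | a b. (a,x) \<in> (flow N)\<inverse> \<and> b \<in> outp M}
                    \<union> {(b,a) | b a. b \<in> inp M \<and> (x,a) \<in> (flow N)\<inverse>}"
    unfolding F'def by auto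
  have Ine: "inp M \<noteq> {}" "outp M \<noteq> {}" "inp N \<noteq> {}" "outp N \<noteq> {}"
    using cN cM unfolding wf_conn_def by auto
  have fN: "\<And>y. y \<in> nodes N \<Longrightarrow> \<exists>i\<in>inp N. (i,y) \<in> (flow N)\<^sup>*"
    and bN: "\<And>y. y \<in> nodes N \<Longrightarrow> \<exists>i\<in>outp N. (y,i) \<in> (flow N)\<^sup>*"
    and fM: "\<And>y. y \<in> nodes M \<Longrightarrow> \<exists>i\<in>inp M. (i,y) \<in> (flow M)\<^sup>*"
    and bM: "\<And>y. y \<in> nodes M \<Longrightarrow> \<exists>i\<in>outp M. (y,i) \<in> (flow M)\<^sup>*"
    using cN cM unfolding wf_conn_def by auto
  have fwd: "\<exists>i\<in>inp N'. (i,y) \<in> ?F\<^sup>*" if y: "y \<in> nodes N'" for y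
  proof -
    have "\<exists>i \<in> (if x \<in> inp N then (inp N - {x}) \<union> inp M else inp N). (i,y) \<in> ?F\<^sup>*"
    proof (rule conn_sub[OF F'def noself Ine(1) xN])
      show "\<And>b. b \<in> inp M \<Longrightarrow> \<exists>ob\<in>outp M. (b,ob) \<in> (flow M)\<^sup>*" using bM ioM by auto
      show "\<And>y. y \<in> nodes N \<Longrightarrow> \<exists>i\<in>inp N. (i,y) \<in> (flow N)\<^sup>*" by (rule fN)
      show "\<And>y. y \<in> nodes M \<Longrightarrow> \<exists>i\<in>inp M. (i,y) \<in> (flow M)\<^sup>*" by (rule fM)
      show "y \<in> (nodes N - {x}) \<union> nodes M" using y nd by simp
    qed
    then show ?thesis unfolding i .
  qed
  have bwd: "\<exists>i\<in>outp N'. (y,i) \<in> ?F\<^sup>*" if y: "y \<in> nodes N'" for y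
  proof -
    have "\<exists>i \<in> (if x \<in> outp N then (outp N - {x}) \<union> outp M else outp N). (i,y) \<in> (?F\<inverse>)\<^sup>*"
    proof (rule conn_sub[OF F'c _ Ine(2) xN])
      show "(x,x) \<notin> (flow N)\<inverse>" using noself by simp
      show "\<And>b. b \<in> outp M \<Longrightarrow> \<exists>ob\<in>inp M. (b,ob) \<in> ((flow M)\<inverse>)\<^sup>*"
        using fM ioM by (auto simp: rtrancl_converse)
      show "\<And>y. y \<in> nodes N \<Longrightarrow> \<exists>i\<in>outp N. (i,y) \<in> ((flow N)\<inverse>)\<^sup>*" using bN by (auto simp: rtrancl_converse)
      show "\<And>y. y \<in> nodes M \<Longrightarrow> \<exists>i\<in>outp M. (i,y) \<in> ((flow M)\<inverse>)\<^sup>*" using bM by (auto simp: rtrancl_converse)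
      show "y \<in> (nodes N - {x}) \<union> nodes M" using y nd by simp
    qed
    then show ?thesis unfolding o by (auto simp: rtrancl_converse)
  qed
  have ne: "inp N' \<noteq> {}" "outp N' \<noteq> {}" using Ine unfolding i o by auto
  show ?thesis unfolding wf_conn_def using ne fwd bwd by blast
qed

lemma subst_place_WF:
  assumes wN: "pWF N \<or> tWF N" and pM: "pWF M" and disj: "nodes N \<inter> nodes M = {}" and p: "p \<in> places N"
  shows "(pWF N \<longrightarrow> pWF (subst_place N p M)) \<and> (tWF N \<longrightarrow> tWF (subst_place N p M))"
proof -
  let ?N' = "subst_place N p M"
  have pnN: "petri_net N" and cN: "wf_conn N" using wN unfolding pWF_def tWF_def by auto
  have pnM: "petri_net M" and cM: "wf_conn M" and ioM: "inp M \<subseteq> places M" "outp M \<subseteq> places M"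
    using pM unfolding pWF_def by auto
  have pt: "p \<notin> trans N" using pnN p unfolding petri_net_def by auto
  have pre_t: "preset N p \<subseteq> trans N" "postset N p \<subseteq> trans N" using pn_preset_place[OF pnN p] pn_postset_place[OF pnN p] .
  have pn': "petri_net ?N'"
  proof -
    have "finite (places ?N')" "finite (trans ?N')" using pnN pnM unfolding petri_net_def subst_place_def by auto
    moreover have "places ?N' \<inter> trans ?N' = {}" using pnN pnM disj unfolding petri_net_def subst_place_def nodes_def by auto
    moreover have "flow ?N' \<subseteq> (places ?N' \<times> trans ?N') \<union> (trans ?N' \<times> places ?N')"
    proof -
      have "flow N \<subseteq> (places N \<times> trans N) \<union> (trans N \<times> places N)"
        "flow M \<subseteq> (places M \<times> trans M) \<union> (trans M \<times> places M)"
        using pnN pnM unfolding petri_net_def by auto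
      then show ?thesis using pre_t ioM unfolding subst_place_def by auto
    qed
    ultimately show ?thesis unfolding petri_net_def by blast
  qed
  have nd': "nodes ?N' = (nodes N - {p}) \<union> nodes M" using pt unfolding nodes_def subst_place_def by auto
  have c': "wf_conn ?N'"
  proof (rule wf_conn_gen[OF cN cM])
    show "p \<in> nodes N" using p by (simp add: nodes_def)
    show "(p,p) \<notin> flow N" using pn_noself[OF pnN] .
    show "inp M \<subseteq> nodes M" "outp M \<subseteq> nodes M" using ioM by (auto simp: nodes_def)
  qed (rule nd' | simp add: subst_place_def)+
  show ?thesis
  proof (intro conjI impI)
    assume "pWF N"
    then have "inp N \<subseteq> places N" "outp N \<subseteq> places N" unfolding pWF_def by auto
    then show "pWF ?N'" unfolding pWF_def using pn' c' ioM by (auto simp: subst_place_def)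
  next
    assume "tWF N"
    then have "inp N \<subseteq> trans N" "outp N \<subseteq> trans N" unfolding tWF_def by auto
    then show "tWF ?N'" unfolding tWF_def using pn' c' pt by (auto simp: subst_place_def)
  qed
qed

lemma subst_trans_WF:
  assumes wN: "pWF N \<or> tWF N" and tM: "tWF M" and disj: "nodes N \<inter> nodes M = {}" and t: "t \<in> trans N"
  shows "(pWF N \<longrightarrow> pWF (subst_trans N t M)) \<and> (tWF N \<longrightarrow> tWF (subst_trans N t M))"
proof -
  let ?N' = "subst_trans N t M"
  have pnN: "petri_net N" and cN: "wf_conn N" using wN unfolding pWF_def tWF_def by auto
  have pnM: "petri_net M" and cM: "wf_conn M" and ioM: "inp M \<subseteq> trans M" "outp M \<subseteq> trans M"
    using tM unfolding tWF_def by auto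
  have pt: "t \<notin> places N" using pnN t unfolding petri_net_def by auto
  have pre_t: "preset N t \<subseteq> places N" "postset N t \<subseteq> places N" using pn_preset_trans[OF pnN t] pn_postset_trans[OF pnN t] .
  have pn': "petri_net ?N'"
  proof -
    have "finite (places ?N')" "finite (trans ?N')" using pnN pnM unfolding petri_net_def subst_trans_def by auto
    moreover have "places ?N' \<inter> trans ?N' = {}" using pnN pnM disj unfolding petri_net_def subst_trans_def nodes_def by auto
    moreover have "flow ?N' \<subseteq> (places ?N' \<times> trans ?N') \<union> (trans ?N' \<times> places ?N')"
    proof -
      have "flow N \<subseteq> (places N \<times> trans N) \<union> (trans N \<times> places N)"
        "flow M \<subseteq> (places M \<times> trans M) \<union> (trans M \<times> places M)"
        using pnN pnM unfolding petri_net_def by auto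
      moreover have "trans M \<inter> trans N = {}" "places M \<inter> places N = {}" using disj unfolding nodes_def by auto
      ultimately show ?thesis using pre_t ioM unfolding subst_trans_def by auto
    qed
    ultimately show ?thesis unfolding petri_net_def by blast
  qed
  have nd': "nodes ?N' = (nodes N - {t}) \<union> nodes M"
  proof -
    have "t \<notin> nodes M" using disj t by (auto simp: nodes_def)
    then show ?thesis using pt unfolding nodes_def subst_trans_def by auto
  qed
  have c': "wf_conn ?N'"
  proof (rule wf_conn_gen[OF cN cM])
    show "t \<in> nodes N" using t by (simp add: nodes_def)
    show "(t,t) \<notin> flow N" using pn_noself[OF pnN] .
    show "inp M \<subseteq> nodes M" "outp M \<subseteq> nodes M" using ioM by (auto simp: nodes_def)
  qed (rule nd' | simp add: subst_trans_def)+
  show ?thesis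
  proof (intro conjI impI)
    assume "pWF N"
    then have "inp N \<subseteq> places N" "outp N \<subseteq> places N" unfolding pWF_def by auto
    then show "pWF ?N'" unfolding pWF_def using pn' c' pt by (auto simp: subst_trans_def)
  next
    assume "tWF N"
    then have "inp N \<subseteq> trans N" "outp N \<subseteq> trans N" unfolding tWF_def by auto
    then show "tWF ?N'" unfolding tWF_def using pn' c' ioM by (auto simp: subst_trans_def)
  qed
qed


definition rename :: "('a \<Rightarrow> 'b) \<Rightarrow> 'a net \<Rightarrow> 'b net" where
  "rename f N = \<lparr> places = f ` places N, trans = f ` trans N, flow = map_prod f f ` flow N,
                  inp = f ` inp N, outp = f ` outp N \<rparr>"

lemma rename_simps[simp]:
  "places (rename f N) = f ` places N" "trans (rename f N) = f ` trans N"
  "flow (rename f N) = map_prod f f ` flow N" "inp (rename f N) = f ` inp N" "outp (rename f N) = f ` outp N"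
  unfolding rename_def by simp_all

lemma rename_nodes: "nodes (rename f N) = f ` nodes N" unfolding nodes_def by auto

lemma rename_preset: "inj f \<Longrightarrow> preset (rename f N) (f u) = f ` preset N u"
  unfolding preset_def by (auto simp: inj_eq)
lemma rename_postset: "inj f \<Longrightarrow> postset (rename f N) (f u) = f ` postset N u"
  unfolding postset_def by (auto simp: inj_eq)

lemma rename_pn: assumes "inj f" "petri_net N" shows "petri_net (rename f N)"
  using assms unfolding petri_net_def by (auto simp: inj_eq image_Int[symmetric])

lemma rename_conn: assumes "inj f" "wf_conn N" shows "wf_conn (rename f N)"
proof -
  have f: "\<And>y. y \<in> nodes N \<Longrightarrow> \<exists>i\<in>inp N. (i,y) \<in> (flow N)\<^sup>*"
    and b: "\<And>y. y \<in> nodes N \<Longrightarrow> \<exists>i\<in>outp N. (y,i) \<in> (flow N)\<^sup>*"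
    and ne: "inp N \<noteq> {}" "outp N \<noteq> {}" using assms(2) unfolding wf_conn_def by auto
  show ?thesis unfolding wf_conn_def rename_nodes
  proof (intro conjI ballI)
    fix y assume "y \<in> f ` nodes N"
    then obtain y0 where y0: "y = f y0" "y0 \<in> nodes N" by auto
    obtain i where "i \<in> inp N" "(i,y0) \<in> (flow N)\<^sup>*" using f[OF y0(2)] by blast
    then show "\<exists>i\<in>inp (rename f N). (i, y) \<in> (flow (rename f N))\<^sup>*"
      using rtrancl_map_prod[of i y0 "flow N" f] y0 by auto
  next
    fix y assume "y \<in> f ` nodes N"
    then obtain y0 where y0: "y = f y0" "y0 \<in> nodes N" by auto
    obtain i where "i \<in> outp N" "(y0,i) \<in> (flow N)\<^sup>*" using b[OF y0(2)] by blast
    then show "\<exists>i\<in>outp (rename f N). (y, i) \<in> (flow (rename f N))\<^sup>*"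
      using rtrancl_map_prod[of y0 i "flow N" f] y0 by auto
  qed (use ne in auto)
qed

lemma rename_pWF: "inj f \<Longrightarrow> pWF N \<Longrightarrow> pWF (rename f N)"
  unfolding pWF_def using rename_pn rename_conn by fastforce
lemma rename_tWF: "inj f \<Longrightarrow> tWF N \<Longrightarrow> tWF (rename f N)"
  unfolding tWF_def using rename_pn rename_conn by fastforce

lemma image_mset_repeat: "image_mset f (repeat_mset n A) = repeat_mset n (image_mset f A)"
  by (induction n) auto

lemma fire_rename_fwd:
  assumes "inj f" "petri_net N" "fire N m m2" shows "fire (rename f N) (image_mset f m) (image_mset f m2)"
proof -
  obtain u where u: "u \<in> trans N" "mset_set (preset N u) \<subseteq># m"
    "m2 + mset_set (preset N u) = m + mset_set (postset N u)" using assms(3) by (auto elim: fire_elim)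
  have i1: "mset_set (preset (rename f N) (f u)) = image_mset f (mset_set (preset N u))"
    using assms(1) by (simp add: rename_preset image_mset_mset_set inj_on_subset[OF assms(1)])
  have i2: "mset_set (postset (rename f N) (f u)) = image_mset f (mset_set (postset N u))"
    using assms(1) by (simp add: rename_postset image_mset_mset_set inj_on_subset[OF assms(1)])
  show ?thesis
  proof (rule fire_intro[of "f u"])
    show "f u \<in> trans (rename f N)" using u by simp
    show "mset_set (preset (rename f N) (f u)) \<subseteq># image_mset f m" unfolding i1
      by (rule image_mset_subseteq_mono[OF u(2)])
    show "image_mset f m2 + mset_set (preset (rename f N) (f u)) = image_mset f m + mset_set (postset (rename f N) (f u))"
      unfolding i1 i2 using arg_cong[OF u(3), of "image_mset f"] by simp
  qed
qed

lemma reach_rename_fwd: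
  assumes "inj f" "petri_net N" "reach N m m2" shows "reach (rename f N) (image_mset f m) (image_mset f m2)"
  using assms(3) unfolding reach_def
proof (induction rule: rtranclp_induct)
  case base then show ?case by simp
next
  case (step y z) then show ?case using fire_rename_fwd[OF assms(1,2)] by (meson rtranclp.rtrancl_into_rtrancl)
qed

lemma fire_rename_bwd:
  assumes "inj f" "petri_net N" "fire (rename f N) z z2" shows "fire N (image_mset (inv f) z) (image_mset (inv f) z2)"
proof -
  obtain v where v: "v \<in> trans (rename f N)" "mset_set (preset (rename f N) v) \<subseteq># z"
    "z2 + mset_set (preset (rename f N) v) = z + mset_set (postset (rename f N) v)" using assms(3) by (auto elim: fire_elim)
  obtain u where u: "v = f u" "u \<in> trans N" using v(1) by auto
  have gf: "image_mset (inv f) (image_mset f A) = A" for A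
    by (simp add: image_mset.compositionality inv_o_cancel[OF assms(1)])
  have i1: "mset_set (preset (rename f N) (f u)) = image_mset f (mset_set (preset N u))"
    using assms(1) by (simp add: rename_preset image_mset_mset_set inj_on_subset[OF assms(1)])
  have i2: "mset_set (postset (rename f N) (f u)) = image_mset f (mset_set (postset N u))"
    using assms(1) by (simp add: rename_postset image_mset_mset_set inj_on_subset[OF assms(1)])
  show ?thesis
  proof (rule fire_intro[OF u(2)])
    show "mset_set (preset N u) \<subseteq># image_mset (inv f) z"
      using image_mset_subseteq_mono[OF v(2), of "inv f"] unfolding u(1) i1 gf .
    show "image_mset (inv f) z2 + mset_set (preset N u) = image_mset (inv f) z + mset_set (postset N u)"
      using arg_cong[OF v(3), of "image_mset (inv f)"] unfolding u(1) i1 i2 by (simp add: gf)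
  qed
qed

lemma reach_rename_bwd:
  assumes "inj f" "petri_net N" "reach (rename f N) z z2" shows "reach N (image_mset (inv f) z) (image_mset (inv f) z2)"
  using assms(3) unfolding reach_def
proof (induction rule: rtranclp_induct)
  case base then show ?case by simp
next
  case (step y z) then show ?case using fire_rename_bwd[OF assms(1,2)] by (meson rtranclp.rtrancl_into_rtrancl)
qed

lemma rename_sound:
  assumes inj: "inj f" and pn: "petri_net N" and ss: "sub_sound_p N"
    and fin: "finite (inp N)" "finite (outp N)"
  shows "sub_sound_p (rename f N)"
  unfolding sub_sound_p_def
proof (intro allI impI)
  fix k k' m'
  assume kk: "k' \<le> k" and mk: "marking (rename f N) m'"
    and r: "reach (rename f N) (repeat_mset k (mset_set (inp (rename f N)))) (m' + repeat_mset k' (mset_set (outp (rename f N))))"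
  have gf: "image_mset (inv f) (image_mset f A) = A" for A
    by (simp add: image_mset.compositionality inv_o_cancel[OF inj])
  have mI: "mset_set (inp (rename f N)) = image_mset f (mset_set (inp N))"
    by (simp add: image_mset_mset_set inj_on_subset[OF inj])
  have mO: "mset_set (outp (rename f N)) = image_mset f (mset_set (outp N))"
    by (simp add: image_mset_mset_set inj_on_subset[OF inj])
  have "reach N (repeat_mset k (mset_set (inp N))) (image_mset (inv f) m' + repeat_mset k' (mset_set (outp N)))"
    using reach_rename_bwd[OF inj pn r] unfolding mI mO image_mset_repeat[symmetric] by (simp add: gf)
  moreover have "marking N (image_mset (inv f) m')"
    using mk unfolding marking_def by (auto simp: inv_f_f[OF inj])
  ultimately have "reach N (image_mset (inv f) m') (repeat_mset (k - k') (mset_set (outp N)))"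
    using ss kk unfolding sub_sound_p_def by blast
  from reach_rename_fwd[OF inj pn this]
  have "reach (rename f N) (image_mset f (image_mset (inv f) m')) (repeat_mset (k - k') (mset_set (outp (rename f N))))"
    unfolding mO image_mset_repeat .
  moreover have "image_mset f (image_mset (inv f) m') = m'"
  proof -
    have "set_mset m' \<subseteq> range f" using mk unfolding marking_def by auto
    then have "image_mset (f \<circ> inv f) m' = image_mset id m'"
      by (intro image_mset_cong) (auto simp: f_inv_into_f)
    then show ?thesis by (simp add: image_mset.compositionality)
  qed
  ultimately show "reach (rename f N) m' (repeat_mset (k - k') (mset_set (outp (rename f N))))" by simp
qed

lemma pc_rename: "pc (rename f M) = rename (map_sum f id) (pc M)"
  unfolding pc_def rename_def
  by (auto simp: image_Un image_image map_prod_def) (auto intro!: image_eqI)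

lemma pc_subst_place:
  assumes tw: "tWF N" and p: "p \<in> places N"
  shows "pc (subst_place N p M) = subst_place (pc N) (Inl p) (rename Inl M)"
proof -
  have pn: "petri_net N" using tw by (rule tWF_pn)
  have io: "p \<notin> inp N" "p \<notin> outp N" "p \<notin> trans N" using tw p pn unfolding tWF_def petri_net_def by auto
  have pre: "preset (pc N) (Inl p) = Inl ` preset N p" "postset (pc N) (Inl p) = Inl ` postset N p"
    using io by (simp_all add: pc_preset_Inl pc_postset_Inl)
  show ?thesis
    unfolding subst_place_def pre
    unfolding pc_def
    using io by (auto simp: image_Un image_image preset_def postset_def)
qed

lemma pc_subst_trans:
  assumes tw: "tWF N" and t: "t \<in> trans N"
  shows "pc (subst_trans N t M) = subst_trans (pc N) (Inl t) (rename Inl M)"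
proof -
  show ?thesis
    unfolding subst_trans_def pc_preset_Inl pc_postset_Inl
    unfolding pc_def
    by (auto simp: image_Un image_image preset_def postset_def)
qed


lemma not_pWF_tWF: "pWF X \<Longrightarrow> tWF X \<Longrightarrow> False"
  unfolding pWF_def tWF_def wf_conn_def petri_net_def by blast

lemma pc_nodes: "nodes (pc N) = Inl ` nodes N \<union> {Inr False, Inr True}"
  unfolding nodes_def by auto

lemma closure_sound:
  fixes N :: "'n net"
  assumes "N \<in> subst_closure (pAND \<union> tAND11 \<union> pOR11 \<union> tOR)"
  shows "sub_sound N"
  using assms
proof (induction rule: subst_closure.induct)
  case (base N)
  then show ?case
  proof (elim UnE)
    assume "N \<in> pAND" then show ?thesis using pAND_sound unfolding sub_sound_def pAND_def by blast
  next
    assume "N \<in> tAND11" then show ?thesis using tAND11_sound unfolding sub_sound_def tAND11_def by blast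
  next
    assume "N \<in> pOR11" then show ?thesis using pOR11_sound unfolding sub_sound_def pOR11_def by blast
  next
    assume "N \<in> tOR" then show ?thesis using tOR_sound unfolding sub_sound_def tOR_def by blast
  qed
next
  case (place N M p)
  have ssM: "sub_sound_p M" using place.IH(2) place.hyps(5) not_pWF_tWF unfolding sub_sound_def by blast
  have wN: "pWF N \<or> tWF N" using place.IH(1) unfolding sub_sound_def by blast
  note W = subst_place_WF[OF wN place.hyps(5) place.hyps(3) place.hyps(4)]
  show ?case
  proof (cases "pWF N")
    case True
    then have ssN: "sub_sound_p N" using place.IH(1) not_pWF_tWF unfolding sub_sound_def by blast
    have "psub N M p" by (rule psub.intro) (use True place.hyps ssN ssM in auto)
    then have "sub_sound_p (subst_place N p M)" by (rule psub.subst_place_sound)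
    then show ?thesis using W True unfolding sub_sound_def by blast
  next
    case False
    then have tw: "tWF N" and ssN: "sub_sound_p (pc N)" using place.IH(1) unfolding sub_sound_def by auto
    have pwM: "pWF (rename Inl M :: ('n + bool) net)" by (rule rename_pWF) (use place.hyps(5) in auto)
    have ssM': "sub_sound_p (rename Inl M :: ('n + bool) net)"
      by (rule rename_sound) (use ssM place.hyps(5) pWF_pn pWF_finite_inp pWF_finite_outp in auto)
    have dj: "nodes (pc N) \<inter> nodes (rename Inl M :: ('n + bool) net) = {}"
      using place.hyps(3) unfolding pc_nodes rename_nodes by auto
    have "psub (pc N) (rename Inl M) (Inl p)"
      by (rule psub.intro) (use pc_pWF[OF tw] pwM dj place.hyps(4) ssN ssM' in auto)
    then have "sub_sound_p (subst_place (pc N) (Inl p) (rename Inl M))" by (rule psub.subst_place_sound)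
    then have "sub_sound_p (pc (subst_place N p M))" unfolding pc_subst_place[OF tw place.hyps(4)] .
    then show ?thesis using W tw unfolding sub_sound_def by blast
  qed
next
  case (trans N M t)
  have ssM: "sub_sound_p (pc M)" using trans.IH(2) trans.hyps(5) not_pWF_tWF unfolding sub_sound_def by blast
  have wN: "pWF N \<or> tWF N" using trans.IH(1) unfolding sub_sound_def by blast
  note W = subst_trans_WF[OF wN trans.hyps(5) trans.hyps(3) trans.hyps(4)]
  show ?case
  proof (cases "pWF N")
    case True
    then have ssN: "sub_sound_p N" using trans.IH(1) not_pWF_tWF unfolding sub_sound_def by blast
    have "tsub N M t" by (rule tsub.intro) (use True trans.hyps ssN ssM in auto)
    then have "sub_sound_p (subst_trans N t M)" by (rule tsub.subst_trans_sound)
    then show ?thesis using W True unfolding sub_sound_def by blast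
  next
    case False
    then have tw: "tWF N" and ssN: "sub_sound_p (pc N)" using trans.IH(1) unfolding sub_sound_def by auto
    have twM: "tWF (rename Inl M :: ('n + bool) net)" by (rule rename_tWF) (use trans.hyps(5) in auto)
    have pwpcM: "pWF (pc M)" by (rule pc_pWF[OF trans.hyps(5)])
    have ssM': "sub_sound_p (pc (rename Inl M :: ('n + bool) net))"
      unfolding pc_rename
    proof (rule rename_sound)
      show "inj (map_sum (Inl :: 'n \<Rightarrow> 'n + bool) (id :: bool \<Rightarrow> bool))"
      proof (rule injI)
        fix x y :: "'n + bool" assume "map_sum Inl id x = map_sum Inl id y"
        then show "x = y" by (cases x; cases y) auto
      qed
    qed (use ssM pwpcM pWF_pn pWF_finite_inp pWF_finite_outp in auto)
    have dj: "nodes (pc N) \<inter> nodes (rename Inl M :: ('n + bool) net) = {}"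
      using trans.hyps(3) unfolding pc_nodes rename_nodes by auto
    have "tsub (pc N) (rename Inl M) (Inl t)"
      by (rule tsub.intro) (use pc_pWF[OF tw] twM dj trans.hyps(4) ssN ssM' in auto)
    then have "sub_sound_p (subst_trans (pc N) (Inl t) (rename Inl M))" by (rule tsub.subst_trans_sound)
    then have "sub_sound_p (pc (subst_trans N t M))" unfolding pc_subst_trans[OF tw trans.hyps(4)] .
    then show ?thesis using W tw unfolding sub_sound_def by blast
  qed
qed

theorem mainTheorem20:
  fixes N :: "'n net"
  assumes "N \<in> subst_closure (pAND \<union> tAND11 \<union> pOR11 \<union> tOR)"
  shows "sub_sound N"
  using assms by (rule closure_sound)

end
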